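(* Let $(G_n)_{n\in\mathbb N}$ be a sequence of groups, let $A$ be a finite subset of $\mathbb N$, and let $(P_n)_{n\in\mathbb N}$ be a partition of $\mathbb N\setminus A$ into finite sets. Then $\mathcal A(G_n)\cong\mathcal A( *_{i\in P_n}G_i)$, the archipelago group of the sequence $( *_{i\in P_n}G_i)_{n\in\mathbb N}$.
   Context: For a sequence of groups $(G_n)_{n\in\mathbb N}$, an infinite word is a map $w:L\to\bigsqcup_n (G_n\setminus\{1\})$ from a countable linearly ordered set $L$ such that $w^{-1}(G_n)$ is finite for every $n$. Two infinite words are equivalent if for every $m$ their restrictions to the letters from $G_1,\dots,G_m$ represent the same element of $G_1*\cdots*G_m$. The topologist's product $\circledast_n G_n$ is the group of equivalence classes, with multiplication induced by concatenation and inversion by reversing the order and inverting each letter. The free product $*_n G_n$ is the subgroup of classes of finite words. The archipelago group is $\mathcal A(G_n):=\circledast_n G_n/\langle\langle *_n G_n\rangle\rangle$ (quotient by normal closure). *)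

theory Defs
  imports Complex_Main "HOL-Algebra.Group" "HOL-Algebra.Coset"
begin

definition valid_letter :: "(nat \<Rightarrow> ('a, 'b) monoid_scheme) \<Rightarrow> nat \<times> 'a \<Rightarrow> bool" where
  "valid_letter G l \<longleftrightarrow> snd l \<in> carrier (G (fst l)) \<and> snd l \<noteq> \<one>\<^bsub>G (fst l)\<^esub>"

definition valid_word :: "(nat \<Rightarrow> ('a, 'b) monoid_scheme) \<Rightarrow> (nat \<times> 'a) list \<Rightarrow> bool" where
  "valid_word G xs \<longleftrightarrow> (\<forall>l \<in> set xs. valid_letter G l)"

inductive red_step :: "(nat \<Rightarrow> ('a, 'b) monoid_scheme) \<Rightarrow> (nat \<times> 'a) list \<Rightarrow> (nat \<times> 'a) list \<Rightarrow> bool"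
  for G where
  merge: "\<lbrakk> valid_word G ws; valid_word G us; valid_letter G (i, a); valid_letter G (i, b);
            a \<otimes>\<^bsub>G i\<^esub> b \<noteq> \<one>\<^bsub>G i\<^esub> \<rbrakk>
          \<Longrightarrow> red_step G (ws @ (i, a) # (i, b) # us) (ws @ (i, a \<otimes>\<^bsub>G i\<^esub> b) # us)"
| cancel: "\<lbrakk> valid_word G ws; valid_word G us; valid_letter G (i, a); valid_letter G (i, b);
            a \<otimes>\<^bsub>G i\<^esub> b = \<one>\<^bsub>G i\<^esub> \<rbrakk>
          \<Longrightarrow> red_step G (ws @ (i, a) # (i, b) # us) (ws @ us)"

definition free_equiv :: "(nat \<Rightarrow> ('a, 'b) monoid_scheme) \<Rightarrow> (nat \<times> 'a) list \<Rightarrow> (nat \<times> 'a) list \<Rightarrow> bool" where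
  "free_equiv G = (sup (red_step G) (red_step G)\<inverse>\<inverse>)\<^sup>*\<^sup>*"

definition words_over :: "nat set \<Rightarrow> (nat \<Rightarrow> ('a, 'b) monoid_scheme) \<Rightarrow> (nat \<times> 'a) list set" where
  "words_over I G = {xs. valid_word G xs \<and> (\<forall>l \<in> set xs. fst l \<in> I)}"

definition fw_class :: "nat set \<Rightarrow> (nat \<Rightarrow> ('a, 'b) monoid_scheme) \<Rightarrow> (nat \<times> 'a) list \<Rightarrow> (nat \<times> 'a) list set" where
  "fw_class I G xs = {ys \<in> words_over I G. free_equiv G xs ys}"

definition free_prod :: "nat set \<Rightarrow> (nat \<Rightarrow> ('a, 'b) monoid_scheme) \<Rightarrow> ((nat \<times> 'a) list set) monoid" where
  "free_prod I G = \<lparr> carrier = fw_class I G ` words_over I G,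
     mult = (\<lambda>U V. fw_class I G ((SOME x. x \<in> U) @ (SOME y. y \<in> V))),
     one = fw_class I G [] \<rparr>"

text \<open>Every countable linear order embeds into the rationals, so an infinite word is
  represented as a partial map from rat to letters; its domain is the index order L.\<close>

definition is_inf_word :: "(nat \<Rightarrow> ('a, 'b) monoid_scheme) \<Rightarrow> (rat \<Rightarrow> (nat \<times> 'a) option) \<Rightarrow> bool" where
  "is_inf_word G w \<longleftrightarrow> (\<forall>q l. w q = Some l \<longrightarrow> valid_letter G l)
      \<and> (\<forall>n. finite {q. \<exists>l. w q = Some l \<and> fst l = n})"

definition proj :: "nat \<Rightarrow> (rat \<Rightarrow> (nat \<times> 'a) option) \<Rightarrow> (nat \<times> 'a) list" where
  "proj m w = map (the \<circ> w) (sorted_list_of_set {q. \<exists>l. w q = Some l \<and> fst l < m})"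

definition inf_equiv :: "(nat \<Rightarrow> ('a, 'b) monoid_scheme) \<Rightarrow> (rat \<Rightarrow> (nat \<times> 'a) option) \<Rightarrow> (rat \<Rightarrow> (nat \<times> 'a) option) \<Rightarrow> bool" where
  "inf_equiv G w v \<longleftrightarrow> (\<forall>m. free_equiv G (proj m w) (proj m v))"

definition iw_class :: "(nat \<Rightarrow> ('a, 'b) monoid_scheme) \<Rightarrow> (rat \<Rightarrow> (nat \<times> 'a) option) \<Rightarrow> (rat \<Rightarrow> (nat \<times> 'a) option) set" where
  "iw_class G w = {v. is_inf_word G v \<and> inf_equiv G w v}"

text \<open>Order embedding of rat onto the rationals in (-1,1), used for concatenation.\<close>

definition emb :: "rat \<Rightarrow> rat" where
  "emb q = q / (1 + \<bar>q\<bar>)"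

definition concat_word :: "(rat \<Rightarrow> 'c option) \<Rightarrow> (rat \<Rightarrow> 'c option) \<Rightarrow> rat \<Rightarrow> 'c option" where
  "concat_word w v q =
     (if q + 1 \<in> range emb then w (inv_into UNIV emb (q + 1))
      else if q - 1 \<in> range emb then v (inv_into UNIV emb (q - 1))
      else None)"

definition top_prod :: "(nat \<Rightarrow> ('a, 'b) monoid_scheme) \<Rightarrow> ((rat \<Rightarrow> (nat \<times> 'a) option) set) monoid" where
  "top_prod G = \<lparr> carrier = iw_class G ` {w. is_inf_word G w},
     mult = (\<lambda>U V. iw_class G (concat_word (SOME x. x \<in> U) (SOME y. y \<in> V))),
     one = iw_class G (\<lambda>_. None) \<rparr>"

text \<open>The free product as the subgroup of classes of finite words.\<close>

definition free_prod_sub :: "(nat \<Rightarrow> ('a, 'b) monoid_scheme) \<Rightarrow> (rat \<Rightarrow> (nat \<times> 'a) option) set set" where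
  "free_prod_sub G = iw_class G ` {w. is_inf_word G w \<and> finite {q. w q \<noteq> None}}"

definition normal_closure :: "('c, 'd) monoid_scheme \<Rightarrow> 'c set \<Rightarrow> 'c set" where
  "normal_closure H S = \<Inter>{N. N \<lhd> H \<and> S \<subseteq> N}"

definition archipelago :: "(nat \<Rightarrow> ('a, 'b) monoid_scheme) \<Rightarrow> ((rat \<Rightarrow> (nat \<times> 'a) option) set set) monoid" where
  "archipelago G = top_prod G Mod normal_closure (top_prod G) (free_prod_sub G)"

end

theory Submission
  imports Defs "HOL-Library.Product_Lexorder" "HOL-Library.Countable"
begin

lemma sls_unique:
  fixes l :: "'a::linorder list"
  assumes "sorted_wrt (<) l"
  shows "sorted_list_of_set (set l) = l"
  using assms strict_sorted_equal[of l "sorted_list_of_set (set l)"]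
  by (simp add: sorted_list_of_set.strict_sorted_key_list_of_set)

lemma sls_unique':
  fixes l :: "'a::linorder list"
  shows "sorted_wrt (<) l \<Longrightarrow> set l = S \<Longrightarrow> sorted_list_of_set S = l"
  using sls_unique by blast

lemma sls_image:
  fixes h :: "'a::linorder \<Rightarrow> 'b::linorder"
  assumes "strict_mono h" "finite S"
  shows "sorted_list_of_set (h ` S) = map h (sorted_list_of_set S)"
proof -
  have "sorted_wrt (<) (map h (sorted_list_of_set S))"
    unfolding sorted_wrt_map
    by (rule sorted_wrt_mono_rel[rotated, OF sorted_list_of_set.strict_sorted_key_list_of_set[of S]])
       (simp add: strict_monoD assms(1))
  moreover have "set (map h (sorted_list_of_set S)) = h ` S" using assms by simp
  ultimately show ?thesis by (rule sls_unique')
qed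

lemma sls_filter:
  fixes S :: "'a::linorder set"
  assumes "finite S"
  shows "sorted_list_of_set {x\<in>S. P x} = filter P (sorted_list_of_set S)"
proof -
  have "sorted_wrt (<) (filter P (sorted_list_of_set S))"
    using sorted_list_of_set.strict_sorted_key_list_of_set[of S] sorted_wrt_filter by blast
  moreover have "set (filter P (sorted_list_of_set S)) = {x\<in>S. P x}" using assms by auto
  ultimately show ?thesis by (rule sls_unique')
qed

lemma sls_append:
  fixes S T :: "'a::linorder set"
  assumes "finite S" "finite T" "\<And>x y. x \<in> S \<Longrightarrow> y \<in> T \<Longrightarrow> x < y"
  shows "sorted_list_of_set (S \<union> T) = sorted_list_of_set S @ sorted_list_of_set T"
proof -
  have "sorted_wrt (<) (sorted_list_of_set S @ sorted_list_of_set T)"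
    using assms sorted_list_of_set.strict_sorted_key_list_of_set[of S]
      sorted_list_of_set.strict_sorted_key_list_of_set[of T]
    by (simp add: sorted_wrt_append)
  moreover have "set (sorted_list_of_set S @ sorted_list_of_set T) = S \<union> T" using assms by auto
  ultimately show ?thesis by (rule sls_unique')
qed

lemma sorted_pair_upt: "sorted_wrt (<) (map (Pair a) [0..<n::nat])" for a :: "'a::linorder"
  by (simp add: sorted_wrt_map less_prod_def' sorted_wrt_upt)

lemma set_concat_pairs: "set (concat (map (\<lambda>q. map (Pair q) [0..<f q]) l)) = {(q,j). q \<in> set l \<and> j < f q}"
  by auto

lemma sorted_concat_pairs:
  fixes l :: "'a::linorder list"
  shows "sorted_wrt (<) l \<Longrightarrow> sorted_wrt (<) (concat (map (\<lambda>q. map (Pair q) [0..<f q]) l))"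
proof (induction l)
  case (Cons a l)
  have sl: "sorted_wrt (<) l" and al: "\<forall>q\<in>set l. a < q" using Cons.prems by auto
  have lt: "\<forall>x\<in>set (map (Pair a) [0..<f a]). \<forall>y\<in>set (concat (map (\<lambda>q. map (Pair q) [0..<f q]) l)). x < y"
  proof (intro ballI)
    fix x y assume "x \<in> set (map (Pair a) [0..<f a])" "y \<in> set (concat (map (\<lambda>q. map (Pair q) [0..<f q]) l))"
    then obtain i q j where "x = (a,i)" "y = (q,j)" "q \<in> set l" unfolding set_concat_pairs by auto
    then show "x < y" using al by (simp add: less_prod_def')
  qed
  show ?case
    unfolding list.map(2) concat.simps(2) sorted_wrt_append
    using Cons.IH[OF sl] sorted_pair_upt[of a "f a"] lt by (intro conjI)
qed simp

lemma sls_pairs: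
  fixes S :: "'a::linorder set" and f :: "'a \<Rightarrow> nat"
  assumes "finite S"
  shows "sorted_list_of_set {(q,j). q \<in> S \<and> j < f q}
     = concat (map (\<lambda>q. map (Pair q) [0..<f q]) (sorted_list_of_set S))"
proof -
  have "sorted_wrt (<) (concat (map (\<lambda>q. map (Pair q) [0..<f q]) (sorted_list_of_set S)))"
    by (rule sorted_concat_pairs) (simp add: sorted_list_of_set.strict_sorted_key_list_of_set)
  moreover have "set (concat (map (\<lambda>q. map (Pair q) [0..<f q]) (sorted_list_of_set S))) = {(q,j). q \<in> S \<and> j < f q}"
    unfolding set_concat_pairs using assms by simp
  ultimately show ?thesis by (rule sls_unique')
qed

section \<open>Embedding rat \<times> nat into rat\<close>

lemma rat_between:
  fixes lo hi :: "rat set"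
  assumes "finite lo" "finite hi" "\<And>a b. a \<in> lo \<Longrightarrow> b \<in> hi \<Longrightarrow> a < b"
  shows "\<exists>c. (\<forall>a\<in>lo. a < c) \<and> (\<forall>b\<in>hi. c < b)"
proof (cases "lo = {}")
  case True
  show ?thesis
  proof (cases "hi = {}")
    case True with \<open>lo = {}\<close> show ?thesis by auto
  next
    case False
    then show ?thesis using True assms
      by (intro exI[of _ "Min hi - 1"]) (auto dest: Min_le[of hi])
  qed
next
  case False
  show ?thesis
  proof (cases "hi = {}")
    case True
    show ?thesis
    proof (intro exI[of _ "Max lo + 1"] conjI ballI)
      fix a assume "a \<in> lo"
      then have "a \<le> Max lo" using assms(1) by simp
      then show "a < Max lo + 1" by simp
    qed (use True in simp)
  next
    case F2: False
    have "Max lo < Min hi" using False F2 assms by auto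
    show ?thesis
    proof (intro exI[of _ "(Max lo + Min hi)/2"] conjI ballI)
      fix a assume "a \<in> lo"
      then have "a \<le> Max lo" using assms(1) by simp
      then show "a < (Max lo + Min hi)/2" using \<open>Max lo < Min hi\<close> by simp
    next
      fix b assume "b \<in> hi"
      then have "Min hi \<le> b" using assms(2) by simp
      then show "(Max lo + Min hi)/2 < b" using \<open>Max lo < Min hi\<close> by simp
    qed
  qed
qed

definition X :: "nat \<Rightarrow> rat \<times> nat" where "X = from_nat"

definition pick :: "rat list \<Rightarrow> nat \<Rightarrow> rat" where
  "pick ls n = (SOME c. \<forall>k<length ls. (X k < X n \<longrightarrow> ls!k < c) \<and> (X n < X k \<longrightarrow> c < ls!k))"

fun LL :: "nat \<Rightarrow> rat list" where
  "LL 0 = []"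
| "LL (Suc n) = LL n @ [pick (LL n) n]"

lemma LL_len: "length (LL n) = n"
  by (induction n) auto

lemma LL_inv: "\<forall>k<n. \<forall>k'<n. X k < X k' \<longrightarrow> LL n ! k < LL n ! k'"
proof (induction n)
  case 0 then show ?case by simp
next
  case (Suc n)
  let ?lo = "{LL n ! k |k. k < n \<and> X k < X n}"
  let ?hi = "{LL n ! k |k. k < n \<and> X n < X k}"
  have "\<exists>c. (\<forall>a\<in>?lo. a < c) \<and> (\<forall>b\<in>?hi. c < b)"
  proof (rule rat_between)
    fix a b assume "a \<in> ?lo" "b \<in> ?hi"
    then obtain k k' where "a = LL n ! k" "k < n" "X k < X n" "b = LL n ! k'" "k' < n" "X n < X k'"
      by blast
    moreover have "X k < X k'" using calculation less_trans by blast
    ultimately show "a < b" using Suc.IH by blast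
  qed auto
  then obtain c where c1: "\<forall>a\<in>?lo. a < c" and c2: "\<forall>b\<in>?hi. c < b" by blast
  have c: "\<forall>k<length (LL n). (X k < X n \<longrightarrow> LL n!k < c) \<and> (X n < X k \<longrightarrow> c < LL n!k)"
  proof (intro allI impI conjI)
    fix k assume k: "k < length (LL n)"
    then have kn: "k < n" by (simp add: LL_len)
    { assume "X k < X n" then have "LL n ! k \<in> ?lo" using kn by blast
      then show "LL n!k < c" using c1 by blast }
    { assume "X n < X k" then have "LL n ! k \<in> ?hi" using kn by blast
      then show "c < LL n!k" using c2 by blast }
  qed
  have p: "\<forall>k<length (LL n). (X k < X n \<longrightarrow> LL n!k < pick (LL n) n) \<and> (X n < X k \<longrightarrow> pick (LL n) n < LL n!k)"
    unfolding pick_def by (rule someI[of _ c]) (rule c)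
  show ?case
  proof (intro allI impI)
    fix k k' assume "k < Suc n" "k' < Suc n" "X k < X k'"
    then show "LL (Suc n) ! k < LL (Suc n) ! k'"
      using Suc p by (auto simp: nth_append LL_len less_Suc_eq)
  qed
qed

lemma LL_prefix: "n \<le> m \<Longrightarrow> k < n \<Longrightarrow> LL m ! k = LL n ! k"
proof (induction m)
  case 0 then show ?case by simp
next
  case (Suc m)
  then show ?case by (cases "n = Suc m") (auto simp: nth_append LL_len)
qed

definition remb :: "rat \<times> nat \<Rightarrow> rat" where
  "remb x = LL (Suc (to_nat x)) ! to_nat x"

lemma strict_mono_remb: "strict_mono remb"
proof (rule strict_monoI)
  fix x y :: "rat \<times> nat" assume "x < y"
  let ?n = "Suc (max (to_nat x) (to_nat y))"
  have "X (to_nat x) < X (to_nat y)" using \<open>x < y\<close> by (simp add: X_def)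
  then have "LL ?n ! to_nat x < LL ?n ! to_nat y" using LL_inv[of ?n] by auto
  then show "remb x < remb y" unfolding remb_def
    using LL_prefix[of "Suc (to_nat x)" ?n "to_nat x"] LL_prefix[of "Suc (to_nat y)" ?n "to_nat y"]
    by simp
qed


section \<open>Finite words\<close>

lemma valid_word_simps[simp]:
  "valid_word G [] = True"
  "valid_word G (l # xs) = (valid_letter G l \<and> valid_word G xs)"
  "valid_word G (xs @ ys) = (valid_word G xs \<and> valid_word G ys)"
  by (auto simp: valid_word_def)

lemma red_step_valid:
  assumes "red_step G x y" "\<And>i. group (G i)"
  shows "valid_word G x \<and> valid_word G y"
  using assms(1)
proof cases
  case (merge ws us i a b)
  have "a \<otimes>\<^bsub>G i\<^esub> b \<in> carrier (G i)"
    using merge assms(2)[of i] by (simp add: valid_letter_def group.is_monoid monoid.m_closed)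
  then show ?thesis using merge by (simp add: valid_letter_def)
qed auto

lemma fe_refl[simp]: "free_equiv G x x"
  by (simp add: free_equiv_def)

lemma fe_step: "red_step G x y \<Longrightarrow> free_equiv G x y"
  by (simp add: free_equiv_def r_into_rtranclp)

lemma fe_step': "red_step G y x \<Longrightarrow> free_equiv G x y"
  by (simp add: free_equiv_def r_into_rtranclp)

lemma fe_trans: "free_equiv G x y \<Longrightarrow> free_equiv G y z \<Longrightarrow> free_equiv G x z"
  unfolding free_equiv_def by (rule rtranclp_trans)

lemma fe_sym: "free_equiv G x y \<Longrightarrow> free_equiv G y x"
  unfolding free_equiv_def
proof (induction rule: rtranclp_induct)
  case (step y z)
  then have "(sup (red_step G) (red_step G)\<inverse>\<inverse>) z y" by auto
  then show ?case using step.IH by (rule converse_rtranclp_into_rtranclp)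
qed simp

lemma fe_induct[consumes 1, case_names refl step]:
  assumes "free_equiv G x y"
    and "P x"
    and "\<And>y z. free_equiv G x y \<Longrightarrow> P y \<Longrightarrow> red_step G y z \<or> red_step G z y \<Longrightarrow> P z"
  shows "P y"
  using assms(1) unfolding free_equiv_def
proof (induction rule: rtranclp_induct)
  case base then show ?case using assms(2) .
next
  case (step y z)
  then show ?case using assms(3)[of y z] by (auto simp: free_equiv_def)
qed

lemma fe_valid:
  assumes "free_equiv G x y" "valid_word G x" "\<And>i. group (G i)"
  shows "valid_word G y"
  using assms(1)
proof (induction rule: fe_induct)
  case refl then show ?case using assms(2) .
next
  case (step y z) then show ?case using red_step_valid[of G y z] red_step_valid[of G z y] assms(3) by blast
qed

lemma fe_map_gen:
  assumes "free_equiv G x y"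
    and "\<And>y z. free_equiv G x y \<Longrightarrow> red_step G y z \<Longrightarrow> R (f y) (f z)"
    and "\<And>u. R u u" "\<And>u v w. R u v \<Longrightarrow> R v w \<Longrightarrow> R u w" "\<And>u v. R u v \<Longrightarrow> R v u"
  shows "R (f x) (f y)"
  using assms(1)
proof (induction rule: fe_induct)
  case refl then show ?case using assms(3) .
next
  case (step y z)
  from step.hyps(2) show ?case
  proof
    assume "red_step G y z" then show ?thesis using step assms(2,4) by blast
  next
    assume r: "red_step G z y"
    have "free_equiv G x z" using step.hyps(1) fe_step'[OF r] fe_trans by blast
    then have "R (f z) (f y)" using assms(2) r by blast
    then show ?thesis using step assms(4,5) by blast
  qed
qed

lemma red_step_context:
  assumes "red_step G x y" "valid_word G u" "valid_word G v"
  shows "red_step G (u @ x @ v) (u @ y @ v)"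
  using assms(1)
proof cases
  case (merge ws us i a b)
  have "red_step G ((u @ ws) @ (i, a) # (i, b) # (us @ v)) ((u @ ws) @ (i, a \<otimes>\<^bsub>G i\<^esub> b) # (us @ v))"
    by (rule red_step.merge) (use merge assms in auto)
  then show ?thesis using merge by simp
next
  case (cancel ws us i a b)
  have "red_step G ((u @ ws) @ (i, a) # (i, b) # (us @ v)) ((u @ ws) @ (us @ v))"
    by (rule red_step.cancel) (use cancel assms in auto)
  then show ?thesis using cancel by simp
qed

lemma fe_context:
  assumes "free_equiv G x y" "valid_word G u" "valid_word G v"
  shows "free_equiv G (u @ x @ v) (u @ y @ v)"
  using assms(1)
proof (rule fe_map_gen[where f = "\<lambda>x. u @ x @ v" and R = "free_equiv G"])
  fix y z assume "red_step G y z"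
  then show "free_equiv G (u @ y @ v) (u @ z @ v)"
    using red_step_context[OF _ assms(2,3)] fe_step by blast
qed (rule fe_refl | erule (1) fe_trans | erule fe_sym)+

lemma fe_append:
  assumes "free_equiv G x x'" "free_equiv G y y'" "valid_word G x" "valid_word G y"
    and grp: "\<And>i. group (G i)"
  shows "free_equiv G (x @ y) (x' @ y')"
proof -
  have a: "free_equiv G ([] @ x @ y) ([] @ x' @ y)"
    by (rule fe_context[OF assms(1)]) (simp_all add: assms(4))
  have vx: "valid_word G x'" by (rule fe_valid[OF assms(1,3) grp])
  have b: "free_equiv G (x' @ y @ []) (x' @ y' @ [])"
    by (rule fe_context[OF assms(2)]) (simp_all add: vx)
  show ?thesis using fe_trans[OF a[simplified] b[simplified]] .
qed

lemma fe_concat: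
  assumes "list_all2 (free_equiv G) xs ys" "\<forall>x\<in>set xs. valid_word G x"
    and grp: "\<And>i. group (G i)"
  shows "free_equiv G (concat xs) (concat ys)"
  using assms(1,2)
proof (induction rule: list_all2_induct)
  case (Cons x xs y ys)
  have "free_equiv G (concat xs) (concat ys)" using Cons.IH Cons.prems by simp
  moreover have "valid_word G x" "valid_word G (concat xs)" using Cons.prems by (auto simp: valid_word_def)
  ultimately show ?case using fe_append[OF Cons.hyps(1) _ _ _ grp] by simp
qed simp

lemma red_step_filter:
  assumes "red_step G x y"
  shows "free_equiv G (filter (\<lambda>l. Q (fst l)) x) (filter (\<lambda>l. Q (fst l)) y)"
  using assms
proof cases
  case (merge ws us i a b)
  show ?thesis
  proof (cases "Q i")
    case True
    have "red_step G (filter (\<lambda>l. Q (fst l)) ws @ (i, a) # (i, b) # filter (\<lambda>l. Q (fst l)) us)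
       (filter (\<lambda>l. Q (fst l)) ws @ (i, a \<otimes>\<^bsub>G i\<^esub> b) # filter (\<lambda>l. Q (fst l)) us)"
      by (rule red_step.merge) (use merge in \<open>auto simp: valid_word_def\<close>)
    then show ?thesis using merge True by (simp add: fe_step)
  next
    case False then show ?thesis using merge by simp
  qed
next
  case (cancel ws us i a b)
  show ?thesis
  proof (cases "Q i")
    case True
    have "red_step G (filter (\<lambda>l. Q (fst l)) ws @ (i, a) # (i, b) # filter (\<lambda>l. Q (fst l)) us)
       (filter (\<lambda>l. Q (fst l)) ws @ filter (\<lambda>l. Q (fst l)) us)"
      by (rule red_step.cancel) (use cancel in \<open>auto simp: valid_word_def\<close>)
    then show ?thesis using cancel True by (simp add: fe_step)
  next
    case False then show ?thesis using cancel by simp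
  qed
qed

lemma fe_filter:
  assumes "free_equiv G x y"
  shows "free_equiv G (filter (\<lambda>l. Q (fst l)) x) (filter (\<lambda>l. Q (fst l)) y)"
  using assms
proof (rule fe_map_gen[where f = "filter (\<lambda>l. Q (fst l))" and R = "free_equiv G"])
  fix y z assume "red_step G y z"
  then show "free_equiv G (filter (\<lambda>l. Q (fst l)) y) (filter (\<lambda>l. Q (fst l)) z)"
    by (rule red_step_filter)
qed (rule fe_refl | erule (1) fe_trans | erule fe_sym)+

section \<open>Retraction onto one factor\<close>

definition ev :: "(nat \<Rightarrow> ('a, 'b) monoid_scheme) \<Rightarrow> nat \<Rightarrow> (nat \<times> 'a) list \<Rightarrow> 'a" where
  "ev G i xs = foldr (\<lambda>l acc. if fst l = i then snd l \<otimes>\<^bsub>G i\<^esub> acc else acc) xs \<one>\<^bsub>G i\<^esub>"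

lemma ev_simps[simp]:
  "ev G i [] = \<one>\<^bsub>G i\<^esub>"
  "ev G i (l # xs) = (if fst l = i then snd l \<otimes>\<^bsub>G i\<^esub> ev G i xs else ev G i xs)"
  by (simp_all add: ev_def)

lemma ev_carrier:
  assumes "valid_word G xs" "group (G i)"
  shows "ev G i xs \<in> carrier (G i)"
  using assms(1)
  by (induction xs) (auto simp: valid_letter_def group.is_monoid[OF assms(2)] monoid.m_closed)

lemma ev_append:
  assumes "valid_word G xs" "valid_word G ys" "group (G i)"
  shows "ev G i (xs @ ys) = ev G i xs \<otimes>\<^bsub>G i\<^esub> ev G i ys"
  using assms(1)
proof (induction xs)
  case Nil then show ?case using ev_carrier[OF assms(2,3)] group.is_monoid[OF assms(3)]
    by (simp add: monoid.l_one)
next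
  case (Cons l xs)
  then show ?case
    using ev_carrier[of G xs i] ev_carrier[of G ys i] assms group.is_monoid[OF assms(3)]
    by (auto simp: valid_letter_def monoid.m_assoc)
qed

lemma red_step_ev:
  assumes "red_step G x y" "\<And>i. group (G i)"
  shows "ev G j x = ev G j y"
  using assms(1)
proof cases
  case (merge ws us i a b)
  have m: "monoid (G i)" using assms(2) group.is_monoid by blast
  have "ev G j [(i,a),(i,b)] = ev G j [(i, a \<otimes>\<^bsub>G i\<^esub> b)]"
    using merge m by (cases "i = j") (auto simp: valid_letter_def monoid.r_one monoid.m_closed)
  moreover have "ev G j ((i,a) # (i,b) # us) = ev G j [(i,a),(i,b)] \<otimes>\<^bsub>G j\<^esub> ev G j us"
    using ev_append[of G "[(i,a),(i,b)]" us j] merge assms(2) by simp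
  moreover have "ev G j ((i,a \<otimes>\<^bsub>G i\<^esub> b) # us) = ev G j [(i, a \<otimes>\<^bsub>G i\<^esub> b)] \<otimes>\<^bsub>G j\<^esub> ev G j us"
    using ev_append[of G "[(i, a \<otimes>\<^bsub>G i\<^esub> b)]" us j] merge assms(2) m
    by (simp add: valid_letter_def monoid.m_closed)
  moreover have "valid_word G ((i,a) # (i,b) # us)" "valid_word G ((i,a \<otimes>\<^bsub>G i\<^esub> b) # us)"
    using merge m by (auto simp: valid_letter_def monoid.m_closed)
  ultimately show ?thesis using merge ev_append[OF _ _ assms(2)] by simp
next
  case (cancel ws us i a b)
  have m: "monoid (G i)" using assms(2) group.is_monoid by blast
  have "ev G j ((i,a) # (i,b) # us) = ev G j [(i,a),(i,b)] \<otimes>\<^bsub>G j\<^esub> ev G j us"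
    using ev_append[of G "[(i,a),(i,b)]" us j] cancel assms(2) by simp
  moreover have "ev G j [(i,a),(i,b)] = \<one>\<^bsub>G j\<^esub>"
    using cancel m by (auto simp: valid_letter_def monoid.r_one monoid.m_assoc[symmetric])
  moreover have "valid_word G ((i,a) # (i,b) # us)" using cancel by auto
  ultimately show ?thesis using cancel ev_append[OF _ _ assms(2)] assms(2)[of j]
    ev_carrier[of G us j] by (simp add: group.is_monoid monoid.l_one)
qed

lemma fe_ev:
  assumes "free_equiv G x y" "\<And>i. group (G i)"
  shows "ev G j x = ev G j y"
  using assms(1)
  by (rule fe_map_gen[where R = "(=)"]) (use red_step_ev[OF _ assms(2)] in auto)

lemma single_not_trivial:
  assumes "valid_letter G l" "\<And>i. group (G i)"
  shows "\<not> free_equiv G [l] []"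
proof
  assume "free_equiv G [l] []"
  then have "ev G (fst l) [l] = ev G (fst l) []" using fe_ev assms(2) by blast
  then show False using assms(1) assms(2)[of "fst l"]
    by (simp add: valid_letter_def group.is_monoid monoid.r_one)
qed

definition inv_letter :: "(nat \<Rightarrow> ('a, 'b) monoid_scheme) \<Rightarrow> nat \<times> 'a \<Rightarrow> nat \<times> 'a" where
  "inv_letter G l = (fst l, inv\<^bsub>G (fst l)\<^esub> snd l)"

definition inv_word where "inv_word G xs = rev (map (inv_letter G) xs)"

lemma inv_letter_valid:
  assumes "valid_letter G l" "group (G (fst l))"
  shows "valid_letter G (inv_letter G l)"
  using assms by (auto simp: valid_letter_def inv_letter_def group.inv_eq_1_iff)

lemma inv_word_valid:
  assumes "valid_word G xs" "\<And>i. group (G i)"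
  shows "valid_word G (inv_word G xs)"
  using assms by (auto simp: valid_word_def inv_word_def intro!: inv_letter_valid)

lemma inv_word_cancel:
  assumes "valid_word G xs" "\<And>i. group (G i)"
  shows "free_equiv G (inv_word G xs @ xs) []"
  using assms(1)
proof (induction xs)
  case (Cons l xs)
  obtain i a where l: "l = (i,a)" by fastforce
  have g: "group (G i)" using assms(2) .
  have va: "valid_letter G (i,a)" using Cons l by simp
  then have vi: "valid_letter G (i, inv\<^bsub>G i\<^esub> a)"
    using inv_letter_valid[of G "(i,a)"] g by (simp add: inv_letter_def)
  have "red_step G (inv_word G xs @ (i, inv\<^bsub>G i\<^esub> a) # (i, a) # xs) (inv_word G xs @ xs)"
    by (rule red_step.cancel)
       (use Cons va vi g inv_word_valid[of G xs, OF _ assms(2)] in \<open>auto simp: valid_letter_def group.l_inv\<close>)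
  then have "free_equiv G (inv_word G (l # xs) @ l # xs) (inv_word G xs @ xs)"
    by (simp add: inv_word_def inv_letter_def l fe_step)
  then show ?case using Cons fe_trans by auto
qed (simp add: inv_word_def)

lemma words_over_valid: "xs \<in> words_over I G \<Longrightarrow> valid_word G xs"
  by (simp add: words_over_def)

lemma fw_class_self: "xs \<in> words_over I G \<Longrightarrow> xs \<in> fw_class I G xs"
  by (simp add: fw_class_def)

lemma fw_class_eq:
  assumes "y \<in> fw_class I G x"
  shows "fw_class I G y = fw_class I G x"
  using assms unfolding fw_class_def by (auto intro: fe_trans fe_sym)

lemma fw_class_eqI:
  assumes "free_equiv G x y"
  shows "fw_class I G x = fw_class I G y"
  using assms unfolding fw_class_def by (auto intro: fe_trans fe_sym)

lemma fw_class_eqD: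
  assumes "fw_class I G x = fw_class I G y" "x \<in> words_over I G"
  shows "free_equiv G x y"
proof -
  have "x \<in> fw_class I G y" using assms fw_class_self by blast
  then show ?thesis by (simp add: fw_class_def fe_sym)
qed

lemma words_over_append: "x \<in> words_over I G \<Longrightarrow> y \<in> words_over I G \<Longrightarrow> x @ y \<in> words_over I G"
  by (auto simp: words_over_def)

lemma some_in_fw_class:
  assumes "x \<in> words_over I G"
  shows "(SOME y. y \<in> fw_class I G x) \<in> fw_class I G x"
  using fw_class_self[OF assms] by (rule someI)

lemma fw_rep:
  assumes "x \<in> words_over I G"
  defines "y \<equiv> SOME y. y \<in> fw_class I G x"
  shows "y \<in> words_over I G" "free_equiv G x y"
  using some_in_fw_class[OF assms(1)] unfolding y_def fw_class_def by auto

lemma fp_mult: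
  assumes "x \<in> words_over I G" "y \<in> words_over I G" "\<And>i. group (G i)"
  shows "fw_class I G x \<otimes>\<^bsub>free_prod I G\<^esub> fw_class I G y = fw_class I G (x @ y)"
proof -
  let ?x = "SOME z. z \<in> fw_class I G x" and ?y = "SOME z. z \<in> fw_class I G y"
  have "free_equiv G ?x x" "free_equiv G ?y y" using fw_rep assms fe_sym by blast+
  moreover have "valid_word G ?x" "valid_word G ?y" using fw_rep(1) assms words_over_valid by blast+
  ultimately have "free_equiv G (?x @ ?y) (x @ y)" using fe_append assms(3) by blast
  then show ?thesis by (simp add: free_prod_def fw_class_eqI)
qed

lemma fp_carrier: "carrier (free_prod I G) = fw_class I G ` words_over I G"
  by (simp add: free_prod_def)

lemma fp_one: "\<one>\<^bsub>free_prod I G\<^esub> = fw_class I G []"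
  by (simp add: free_prod_def)

lemma nil_words_over[simp]: "[] \<in> words_over I G"
  by (simp add: words_over_def valid_word_def)

lemma inv_word_words_over:
  assumes "x \<in> words_over I G" "\<And>i. group (G i)"
  shows "inv_word G x \<in> words_over I G"
  using assms inv_word_valid[of G x]
  by (auto simp: words_over_def inv_word_def inv_letter_def)

lemma group_free_prod:
  assumes grp: "\<And>i. group (G i)"
  shows "group (free_prod I G)"
proof (rule groupI)
  fix U V assume "U \<in> carrier (free_prod I G)" "V \<in> carrier (free_prod I G)"
  then obtain x y where xy: "x \<in> words_over I G" "y \<in> words_over I G" "U = fw_class I G x" "V = fw_class I G y"
    by (auto simp: fp_carrier)
  then show "U \<otimes>\<^bsub>free_prod I G\<^esub> V \<in> carrier (free_prod I G)"
    using fp_mult[OF xy(1,2) grp] words_over_append[OF xy(1,2)] by (auto simp: fp_carrier)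
next
  show "\<one>\<^bsub>free_prod I G\<^esub> \<in> carrier (free_prod I G)" by (auto simp: fp_carrier fp_one)
next
  fix U V W assume "U \<in> carrier (free_prod I G)" "V \<in> carrier (free_prod I G)" "W \<in> carrier (free_prod I G)"
  then obtain x y z where xyz: "x \<in> words_over I G" "y \<in> words_over I G" "z \<in> words_over I G"
    "U = fw_class I G x" "V = fw_class I G y" "W = fw_class I G z"
    by (auto simp: fp_carrier)
  have "U \<otimes>\<^bsub>free_prod I G\<^esub> V \<otimes>\<^bsub>free_prod I G\<^esub> W = fw_class I G ((x @ y) @ z)"
    using xyz fp_mult[OF xyz(1,2) grp] fp_mult[OF words_over_append[OF xyz(1,2)] xyz(3) grp] by simp
  moreover have "U \<otimes>\<^bsub>free_prod I G\<^esub> (V \<otimes>\<^bsub>free_prod I G\<^esub> W) = fw_class I G (x @ (y @ z))"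
    using xyz fp_mult[OF xyz(2,3) grp] fp_mult[OF xyz(1) words_over_append[OF xyz(2,3)] grp] by simp
  ultimately show "U \<otimes>\<^bsub>free_prod I G\<^esub> V \<otimes>\<^bsub>free_prod I G\<^esub> W = U \<otimes>\<^bsub>free_prod I G\<^esub> (V \<otimes>\<^bsub>free_prod I G\<^esub> W)"
    by simp
next
  fix U assume "U \<in> carrier (free_prod I G)"
  then obtain x where "x \<in> words_over I G" "U = fw_class I G x" by (auto simp: fp_carrier)
  then show "\<one>\<^bsub>free_prod I G\<^esub> \<otimes>\<^bsub>free_prod I G\<^esub> U = U"
    using fp_mult[where G=G, OF _ _ grp] by (simp add: fp_one)
next
  fix U assume "U \<in> carrier (free_prod I G)"
  then obtain x where x: "x \<in> words_over I G" "U = fw_class I G x" by (auto simp: fp_carrier)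
  have ix: "inv_word G x \<in> words_over I G" using inv_word_words_over x grp by blast
  have "fw_class I G (inv_word G x) \<otimes>\<^bsub>free_prod I G\<^esub> U = fw_class I G []"
    using fp_mult[OF ix x(1) grp] inv_word_cancel[OF words_over_valid[OF x(1)] grp] x(2)
    by (simp add: fw_class_eqI)
  then show "\<exists>V\<in>carrier (free_prod I G). V \<otimes>\<^bsub>free_prod I G\<^esub> U = \<one>\<^bsub>free_prod I G\<^esub>"
    using ix by (auto simp: fp_carrier fp_one)
qed


section \<open>Infinite words\<close>

definition pos :: "nat \<Rightarrow> (rat \<Rightarrow> (nat \<times> 'a) option) \<Rightarrow> rat set" where
  "pos m w = {q. \<exists>l. w q = Some l \<and> fst l < m}"

lemma iw_valid: "is_inf_word G w \<Longrightarrow> w q = Some l \<Longrightarrow> valid_letter G l"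
  unfolding is_inf_word_def by blast

lemma iw_finite: "is_inf_word G w \<Longrightarrow> finite {q. \<exists>l. w q = Some l \<and> fst l = n}"
  unfolding is_inf_word_def by blast

lemma iw_intro:
  assumes "\<And>q l. w q = Some l \<Longrightarrow> valid_letter G l"
    and "\<And>n. finite {q. \<exists>l. w q = Some l \<and> fst l = n}"
  shows "is_inf_word G w"
  using assms unfolding is_inf_word_def by blast

lemma proj_pos: "proj m w = map (the \<circ> w) (sorted_list_of_set (pos m w))"
  by (simp add: proj_def pos_def)

lemma finite_pos:
  assumes "is_inf_word G w"
  shows "finite (pos m w)"
proof -
  have "pos m w = (\<Union>n<m. {q. \<exists>l. w q = Some l \<and> fst l = n})" by (auto simp: pos_def)
  then show ?thesis using iw_finite[OF assms] by simp
qed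

lemma proj_valid:
  assumes "is_inf_word G w"
  shows "valid_word G (proj m w)"
proof -
  have "valid_letter G (the (w q))" if qp: "q \<in> pos m w" for q
  proof -
    obtain l where "w q = Some l" using qp unfolding pos_def by blast
    then show ?thesis using iw_valid[OF assms] by simp
  qed
  then show ?thesis unfolding valid_word_def proj_pos using finite_pos[OF assms, of m] by auto
qed

lemma emb_bound: "\<bar>emb q\<bar> < 1"
  by (auto simp: emb_def abs_if divide_less_eq field_simps)

lemma strict_mono_emb: "strict_mono emb"
proof (rule strict_monoI)
  fix q r :: rat assume "q < r"
  have d1: "1 + \<bar>q\<bar> > 0" "1 + \<bar>r\<bar> > 0" by (simp_all add: add_pos_nonneg)
  have "q * (1 + \<bar>r\<bar>) < r * (1 + \<bar>q\<bar>)"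
  proof (cases "q \<ge> 0")
    case True then show ?thesis using \<open>q < r\<close> by (simp add: algebra_simps)
  next
    case False
    show ?thesis
    proof (cases "r \<ge> 0")
      case True
      have a: "q * (1 + r) < 0" using False True by (simp add: mult_neg_pos add_pos_nonneg)
      have b: "r * (1 - q) \<ge> 0" using False True by simp
      have e: "q * (1 + \<bar>r\<bar>) = q*(1+r)" "r*(1+\<bar>q\<bar>) = r*(1-q)" using False True by simp_all
      show ?thesis unfolding e using a b by linarith
    next
      case F2: False
      then show ?thesis using False \<open>q < r\<close> by (simp add: algebra_simps)
    qed
  qed
  then show "emb q < emb r" unfolding emb_def using d1 by (simp add: divide_less_eq less_divide_eq field_simps)
qed

lemma inj_emb: "inj emb"
  using strict_mono_emb strict_mono_imp_inj_on by blast

lemma emb_inv[simp]: "inv_into UNIV emb (emb r) = r"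
  by (simp add: inj_emb)

lemma cw_left[simp]: "concat_word w v (emb r - 1) = w r"
  by (simp add: concat_word_def)

lemma cw_right[simp]: "concat_word w v (emb r + 1) = v r"
proof -
  have "emb r + 1 + 1 \<noteq> emb x" for x using emb_bound[of r] emb_bound[of x] by (simp add: abs_less_iff)
  then have "emb r + 1 + 1 \<notin> range emb" by blast
  then show ?thesis by (simp add: concat_word_def)
qed

lemma cw_cases:
  "concat_word w v p \<noteq> None \<Longrightarrow> (\<exists>r. p = emb r - 1) \<or> (\<exists>r. p = emb r + 1)"
proof -
  assume a: "concat_word w v p \<noteq> None"
  show ?thesis
  proof (cases "p + 1 \<in> range emb")
    case True
    then obtain r where "p + 1 = emb r" by blast
    then have "p = emb r - 1" by (simp add: algebra_simps)
    then show ?thesis by blast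
  next
    case False
    then have "p - 1 \<in> range emb" using a by (auto simp: concat_word_def split: if_splits)
    then obtain r where "p - 1 = emb r" by blast
    then have "p = emb r + 1" by (simp add: algebra_simps)
    then show ?thesis by blast
  qed
qed

lemma strict_mono_shift: "strict_mono (\<lambda>r. emb r + c)"
  using strict_mono_emb by (simp add: strict_mono_def)

lemma pos_cw:
  "pos m (concat_word w v) = (\<lambda>r. emb r - 1) ` pos m w \<union> (\<lambda>r. emb r + 1) ` pos m v"
proof (rule equalityI; rule subsetI)
  fix p assume p: "p \<in> pos m (concat_word w v)"
  then obtain l where l: "concat_word w v p = Some l" "fst l < m" by (auto simp: pos_def)
  have "concat_word w v p \<noteq> None" using l(1) by simp
  then consider r where "p = emb r - 1" | r where "p = emb r + 1" using cw_cases[of w v p] by blast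
  then show "p \<in> (\<lambda>r. emb r - 1) ` pos m w \<union> (\<lambda>r. emb r + 1) ` pos m v"
  proof cases
    case (1 r)
    then have "r \<in> pos m w" using l unfolding pos_def by (intro CollectI exI[of _ l] conjI) simp_all
    then show ?thesis using 1 by blast
  next
    case (2 r)
    then have "r \<in> pos m v" using l unfolding pos_def by (intro CollectI exI[of _ l] conjI) simp_all
    then show ?thesis using 2 by blast
  qed
next
  fix p assume "p \<in> (\<lambda>r. emb r - 1) ` pos m w \<union> (\<lambda>r. emb r + 1) ` pos m v"
  then consider r where "p = emb r - 1" "r \<in> pos m w" | r where "p = emb r + 1" "r \<in> pos m v" by blast
  then show "p \<in> pos m (concat_word w v)"
    by cases (simp_all add: pos_def)
qed

lemma proj_cw:
  assumes "is_inf_word G w" "is_inf_word G v"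
  shows "proj m (concat_word w v) = proj m w @ proj m v"
proof -
  have f: "finite (pos m w)" "finite (pos m v)" using finite_pos assms by blast+
  have sm1: "strict_mono (\<lambda>r. emb r + (-1))" and sm2: "strict_mono (\<lambda>r. emb r + 1)"
    using strict_mono_shift by blast+
  have lt: "x < y" if xy: "x \<in> (\<lambda>r. emb r - 1) ` pos m w" "y \<in> (\<lambda>r. emb r + 1) ` pos m v" for x y
  proof -
    obtain r s where "x = emb r - 1" "y = emb s + 1" using xy by blast
    then show ?thesis using emb_bound[of r] emb_bound[of s] by (simp add: abs_less_iff)
  qed
  have "sorted_list_of_set (pos m (concat_word w v))
     = map (\<lambda>r. emb r - 1) (sorted_list_of_set (pos m w)) @ map (\<lambda>r. emb r + 1) (sorted_list_of_set (pos m v))"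
    unfolding pos_cw using sls_append[OF finite_imageI[OF f(1)] finite_imageI[OF f(2)] lt]
      sls_image[OF sm1 f(1)] sls_image[OF sm2 f(2)] by simp
  then show ?thesis by (simp add: proj_pos comp_def)
qed

lemma cw_inf_word:
  assumes "is_inf_word G w" "is_inf_word G v"
  shows "is_inf_word G (concat_word w v)"
proof -
  have "valid_letter G l" if pl: "concat_word w v p = Some l" for p l
  proof -
    from pl have "concat_word w v p \<noteq> None" by simp
    then consider r where "p = emb r - 1" | r where "p = emb r + 1" using cw_cases[of w v p] by blast
    then show ?thesis
    proof cases
      case (1 r) then have "w r = Some l" using pl by simp
      then show ?thesis by (rule iw_valid[OF assms(1)])
    next
      case (2 r) then have "v r = Some l" using pl by simp
      then show ?thesis by (rule iw_valid[OF assms(2)])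
    qed
  qed
  moreover have "finite {q. \<exists>l. concat_word w v q = Some l \<and> fst l = n}" for n
  proof -
    have "{q. \<exists>l. concat_word w v q = Some l \<and> fst l = n} \<subseteq> pos (Suc n) (concat_word w v)"
      by (auto simp: pos_def)
    moreover have "finite (pos (Suc n) (concat_word w v))"
      unfolding pos_cw using finite_pos[OF assms(1)] finite_pos[OF assms(2)] by simp
    ultimately show ?thesis by (rule finite_subset)
  qed
  ultimately show ?thesis by (rule iw_intro)
qed

definition winv :: "(nat \<Rightarrow> ('a, 'b) monoid_scheme) \<Rightarrow> (rat \<Rightarrow> (nat \<times> 'a) option) \<Rightarrow> rat \<Rightarrow> (nat \<times> 'a) option" where
  "winv G w q = map_option (inv_letter G) (w (-q))"

lemma pos_winv: "pos m (winv G w) = uminus ` pos m w"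
  by (auto simp: pos_def winv_def inv_letter_def image_def) (metis minus_minus)

lemma sls_uminus:
  fixes S :: "rat set"
  assumes "finite S"
  shows "sorted_list_of_set (uminus ` S) = rev (map uminus (sorted_list_of_set S))"
proof (rule sls_unique')
  have "sorted_wrt (<) (sorted_list_of_set S)" by (simp add: sorted_list_of_set.strict_sorted_key_list_of_set)
  then show "sorted_wrt (<) (rev (map uminus (sorted_list_of_set S)))"
    by (simp add: sorted_wrt_rev sorted_wrt_map)
qed (use assms in simp)

lemma proj_winv:
  assumes "is_inf_word G w"
  shows "proj m (winv G w) = inv_word G (proj m w)"
  using finite_pos[OF assms, of m]
  by (simp add: proj_pos pos_winv sls_uminus inv_word_def rev_map comp_def winv_def option.map_sel
       flip: rev_map)
     (auto simp: pos_def intro!: map_cong option.map_sel)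

lemma winv_inf_word:
  assumes "is_inf_word G w" "\<And>i. group (G i)"
  shows "is_inf_word G (winv G w)"
proof -
  have "valid_letter G l" if "winv G w p = Some l" for p l
  proof -
    define l' where "l' = the (w (-p))"
    have l': "w (-p) = Some l'" "l = inv_letter G l'" using that by (auto simp: winv_def l'_def)
    then show ?thesis using inv_letter_valid[OF iw_valid[OF assms(1) l'(1)] assms(2)] by simp
  qed
  moreover have "finite {q. \<exists>l. winv G w q = Some l \<and> fst l = n}" for n
  proof -
    have "{q. \<exists>l. winv G w q = Some l \<and> fst l = n} \<subseteq> pos (Suc n) (winv G w)"
      by (auto simp: pos_def)
    moreover have "finite (pos (Suc n) (winv G w))"
      unfolding pos_winv using finite_pos assms by blast
    ultimately show ?thesis by (rule finite_subset)
  qed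
  ultimately show ?thesis by (rule iw_intro)
qed

lemma empty_inf_word[simp]: "is_inf_word G (\<lambda>_. None)"
  by (simp add: is_inf_word_def)

lemma proj_empty[simp]: "proj m (\<lambda>_. None) = []"
  by (simp add: proj_def)

lemma ie_refl[simp]: "inf_equiv G w w"
  by (simp add: inf_equiv_def)

lemma ie_sym: "inf_equiv G w v \<Longrightarrow> inf_equiv G v w"
  by (simp add: inf_equiv_def fe_sym)

lemma ie_trans: "inf_equiv G w v \<Longrightarrow> inf_equiv G v u \<Longrightarrow> inf_equiv G w u"
  unfolding inf_equiv_def using fe_trans by blast

lemma iw_class_self: "is_inf_word G w \<Longrightarrow> w \<in> iw_class G w"
  by (simp add: iw_class_def)

lemma iw_class_eqI: "inf_equiv G w v \<Longrightarrow> iw_class G w = iw_class G v"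
  unfolding iw_class_def using ie_trans ie_sym by blast

lemma iw_class_eqD:
  assumes "iw_class G w = iw_class G v" "is_inf_word G w"
  shows "inf_equiv G w v"
proof -
  have "w \<in> iw_class G v" using assms iw_class_self by blast
  then show ?thesis by (simp add: iw_class_def ie_sym)
qed

lemma iw_rep:
  assumes "is_inf_word G w"
  defines "x \<equiv> SOME x. x \<in> iw_class G w"
  shows "is_inf_word G x" "inf_equiv G w x"
proof -
  have "x \<in> iw_class G w" unfolding x_def using iw_class_self[OF assms(1)] by (rule someI[of "\<lambda>x. x \<in> iw_class G w"])
  then show "is_inf_word G x" "inf_equiv G w x" by (auto simp: iw_class_def)
qed

lemma ie_cw:
  assumes "inf_equiv G w w'" "inf_equiv G v v'"
    and "is_inf_word G w" "is_inf_word G w'" "is_inf_word G v" "is_inf_word G v'"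
    and grp: "\<And>i. group (G i)"
  shows "inf_equiv G (concat_word w v) (concat_word w' v')"
  unfolding inf_equiv_def
proof
  fix m
  show "free_equiv G (proj m (concat_word w v)) (proj m (concat_word w' v'))"
    using assms proj_cw[of G] fe_append[OF _ _ _ _ grp] proj_valid[of G]
    by (simp add: inf_equiv_def)
qed

lemma tp_mult:
  assumes "is_inf_word G w" "is_inf_word G v" and grp: "\<And>i. group (G i)"
  shows "iw_class G w \<otimes>\<^bsub>top_prod G\<^esub> iw_class G v = iw_class G (concat_word w v)"
proof -
  let ?x = "SOME x. x \<in> iw_class G w" and ?y = "SOME y. y \<in> iw_class G v"
  have "inf_equiv G (concat_word ?x ?y) (concat_word w v)"
    by (rule ie_cw) (use iw_rep assms ie_sym in blast)+
  then show ?thesis by (simp add: Defs.top_prod_def iw_class_eqI)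
qed

lemma tp_carrier: "carrier (top_prod G) = iw_class G ` {w. is_inf_word G w}"
  by (simp add: Defs.top_prod_def)

lemma tp_one: "\<one>\<^bsub>top_prod G\<^esub> = iw_class G (\<lambda>_. None)"
  by (simp add: Defs.top_prod_def)

lemma ie_by_proj:
  assumes "\<And>m. proj m w = proj m v"
  shows "inf_equiv G w v"
  using assms by (simp add: inf_equiv_def)

lemma group_top_prod:
  assumes grp: "\<And>i. group (G i)"
  shows "group (top_prod G)"
proof (rule groupI)
  fix U V assume "U \<in> carrier (top_prod G)" "V \<in> carrier (top_prod G)"
  then obtain x y where xy: "is_inf_word G x" "is_inf_word G y" "U = iw_class G x" "V = iw_class G y"
    by (auto simp: tp_carrier)
  then show "U \<otimes>\<^bsub>top_prod G\<^esub> V \<in> carrier (top_prod G)"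
    using tp_mult[OF xy(1,2) grp] cw_inf_word[OF xy(1,2)] by (auto simp: tp_carrier)
next
  show "\<one>\<^bsub>top_prod G\<^esub> \<in> carrier (top_prod G)" by (auto simp: tp_carrier tp_one)
next
  fix U V W assume "U \<in> carrier (top_prod G)" "V \<in> carrier (top_prod G)" "W \<in> carrier (top_prod G)"
  then obtain x y z where xyz: "is_inf_word G x" "is_inf_word G y" "is_inf_word G z"
    "U = iw_class G x" "V = iw_class G y" "W = iw_class G z"
    by (auto simp: tp_carrier)
  have "U \<otimes>\<^bsub>top_prod G\<^esub> V \<otimes>\<^bsub>top_prod G\<^esub> W = iw_class G (concat_word (concat_word x y) z)"
    using xyz tp_mult[OF xyz(1,2) grp] tp_mult[OF cw_inf_word[OF xyz(1,2)] xyz(3) grp] by simp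
  moreover have "U \<otimes>\<^bsub>top_prod G\<^esub> (V \<otimes>\<^bsub>top_prod G\<^esub> W) = iw_class G (concat_word x (concat_word y z))"
    using xyz tp_mult[OF xyz(2,3) grp] tp_mult[OF xyz(1) cw_inf_word[OF xyz(2,3)] grp] by simp
  moreover have "inf_equiv G (concat_word (concat_word x y) z) (concat_word x (concat_word y z))"
    by (rule ie_by_proj)
       (simp add: proj_cw[OF cw_inf_word[OF xyz(1,2)] xyz(3)] proj_cw[OF xyz(1) cw_inf_word[OF xyz(2,3)]]
         proj_cw[OF xyz(1,2)] proj_cw[OF xyz(2,3)])
  ultimately show "U \<otimes>\<^bsub>top_prod G\<^esub> V \<otimes>\<^bsub>top_prod G\<^esub> W = U \<otimes>\<^bsub>top_prod G\<^esub> (V \<otimes>\<^bsub>top_prod G\<^esub> W)"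
    by (simp add: iw_class_eqI)
next
  fix U assume "U \<in> carrier (top_prod G)"
  then obtain x where x: "is_inf_word G x" "U = iw_class G x" by (auto simp: tp_carrier)
  have "inf_equiv G (concat_word (\<lambda>_. None) x) x"
    by (rule ie_by_proj) (simp add: proj_cw[OF empty_inf_word x(1)])
  then show "\<one>\<^bsub>top_prod G\<^esub> \<otimes>\<^bsub>top_prod G\<^esub> U = U"
    using tp_mult[OF empty_inf_word x(1) grp] x by (simp add: tp_one iw_class_eqI)
next
  fix U assume "U \<in> carrier (top_prod G)"
  then obtain x where x: "is_inf_word G x" "U = iw_class G x" by (auto simp: tp_carrier)
  have ix: "is_inf_word G (winv G x)" using winv_inf_word x grp by blast
  have "inf_equiv G (concat_word (winv G x) x) (\<lambda>_. None)"
    unfolding inf_equiv_def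
    using proj_cw[OF ix x(1)] proj_winv[OF x(1)] inv_word_cancel[OF proj_valid[OF x(1)] grp]
    by simp
  then have "iw_class G (winv G x) \<otimes>\<^bsub>top_prod G\<^esub> U = \<one>\<^bsub>top_prod G\<^esub>"
    using tp_mult[OF ix x(1) grp] x by (simp add: tp_one iw_class_eqI)
  then show "\<exists>V\<in>carrier (top_prod G). V \<otimes>\<^bsub>top_prod G\<^esub> U = \<one>\<^bsub>top_prod G\<^esub>"
    using ix by (auto simp: tp_carrier)
qed


lemma proj_sub:
  assumes "finite (pos K w)"
  shows "map (the \<circ> w) (sorted_list_of_set {q \<in> pos K w. C (the (w q))}) = filter C (proj K w)"
  using assms by (simp add: sls_filter proj_pos filter_map comp_def)

lemma pos_mono_filter:
  assumes "m \<le> K"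
  shows "pos m w = {q \<in> pos K w. fst (the (w q)) < m}"
  using assms by (auto simp: pos_def)

lemma proj_mono:
  assumes "is_inf_word G w" "m \<le> K"
  shows "proj m w = filter (\<lambda>l. fst l < m) (proj K w)"
  using proj_sub[OF finite_pos[OF assms(1)], where C = "\<lambda>l. fst l < m"] pos_mono_filter[OF assms(2), of w]
  by (simp add: proj_pos)

locale arch =
  fixes G :: "nat \<Rightarrow> ('a, 'b) monoid_scheme"
    and A :: "nat set"
    and P :: "nat \<Rightarrow> nat set"
  assumes groups: "\<And>n. group (G n)"
    and finA: "finite A"
    and finP: "\<And>n. finite (P n)"
    and nonempty: "\<And>n. P n \<noteq> {}"
    and disj: "\<And>m n. m \<noteq> n \<Longrightarrow> P m \<inter> P n = {}"
    and cover: "(\<Union>n. P n) = UNIV - A"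
begin

definition H :: "nat \<Rightarrow> ((nat \<times> 'a) list set) monoid" where
  "H n = free_prod (P n) G"

lemma groupsH: "group (H n)"
  unfolding H_def using group_free_prod groups by blast

definition blk :: "nat \<Rightarrow> nat" where "blk i = (SOME n. i \<in> P n)"

lemma P_notA: "i \<in> P n \<Longrightarrow> i \<notin> A"
  using cover by blast

lemma blk_in: "i \<notin> A \<Longrightarrow> i \<in> P (blk i)"
proof -
  assume "i \<notin> A"
  then have "\<exists>n. i \<in> P n" using cover by blast
  then show ?thesis unfolding blk_def by (rule someI_ex)
qed

lemma blk_eq: "i \<in> P n \<Longrightarrow> blk i = n"
  using blk_in[OF P_notA] disj by blast

definition bound :: "nat \<Rightarrow> nat" where
  "bound M = Suc (Max (insert 0 (blk ` ({..<M} - A))))"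

lemma bound: "i < M \<Longrightarrow> i \<notin> A \<Longrightarrow> blk i < bound M"
  unfolding bound_def by (simp add: le_imp_less_Suc)

definition kbound :: "nat \<Rightarrow> nat" where
  "kbound m = Suc (Max (insert 0 (\<Union>n<m. P n)))"

lemma kbound: "i \<notin> A \<Longrightarrow> blk i < m \<Longrightarrow> i < kbound m"
proof -
  assume "i \<notin> A" "blk i < m"
  then have "i \<in> (\<Union>n<m. P n)" using blk_in by blast
  moreover have "finite (insert 0 (\<Union>n<m. P n))" using finP by simp
  ultimately show ?thesis unfolding kbound_def by (simp add: le_imp_less_Suc)
qed

section \<open>The map Phi\<close>

definition lift :: "nat \<times> 'a \<Rightarrow> nat \<times> (nat \<times> 'a) list set" where
  "lift l = (blk (fst l), fw_class (P (blk (fst l))) G [l])"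

definition Phi :: "(rat \<Rightarrow> (nat \<times> 'a) option) \<Rightarrow> rat \<Rightarrow> (nat \<times> (nat \<times> 'a) list set) option" where
  "Phi w q = (case w q of None \<Rightarrow> None | Some l \<Rightarrow> if fst l \<in> A then None else Some (lift l))"

lemma single_words_over:
  assumes "valid_letter G l" "fst l \<notin> A"
  shows "[l] \<in> words_over (P (blk (fst l))) G"
  using assms blk_in by (simp add: words_over_def)

lemma lift_valid:
  assumes "valid_letter G l" "fst l \<notin> A"
  shows "valid_letter H (lift l)"
proof -
  have w: "[l] \<in> words_over (P (blk (fst l))) G" using single_words_over assms by blast
  have "fw_class (P (blk (fst l))) G [l] \<noteq> fw_class (P (blk (fst l))) G []"
    using fw_class_eqD[OF _ w] single_not_trivial[OF assms(1) groups] by blast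
  then show ?thesis using w
    by (simp add: valid_letter_def lift_def H_def fp_carrier fp_one)
qed

lemma Phi_inf_word:
  assumes "is_inf_word G w"
  shows "is_inf_word H (Phi w)"
proof (rule iw_intro)
  fix q l' assume "Phi w q = Some l'"
  then obtain l where "w q = Some l" "fst l \<notin> A" "l' = lift l"
    by (auto simp: Phi_def split: option.splits if_splits)
  then show "valid_letter H l'" using lift_valid iw_valid[OF assms] by blast
next
  fix n
  have "{q. \<exists>l'. Phi w q = Some l' \<and> fst l' = n} \<subseteq> (\<Union>i\<in>P n. {q. \<exists>l. w q = Some l \<and> fst l = i})"
  proof
    fix q assume "q \<in> {q. \<exists>l'. Phi w q = Some l' \<and> fst l' = n}"
    then obtain l' where l': "Phi w q = Some l'" "fst l' = n" by blast
    then obtain l where l: "w q = Some l" "fst l \<notin> A" "l' = lift l"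
      by (auto simp: Phi_def split: option.splits if_splits)
    then have "fst l \<in> P n" using l' blk_in by (auto simp: lift_def)
    then show "q \<in> (\<Union>i\<in>P n. {q. \<exists>l. w q = Some l \<and> fst l = i})"
      using l(1) by (intro UN_I[of "fst l"] CollectI exI[of _ l] conjI) simp_all
  qed
  moreover have "finite (\<Union>i\<in>P n. {q. \<exists>l. w q = Some l \<and> fst l = i})"
    using finP iw_finite[OF assms] by blast
  ultimately show "finite {q. \<exists>l'. Phi w q = Some l' \<and> fst l' = n}" by (rule finite_subset)
qed

lemma Phi_cw: "Phi (concat_word x y) = concat_word (Phi x) (Phi y)"
  by (rule ext) (simp add: concat_word_def Phi_def)

lemma Phi_finite: "finite {q. w q \<noteq> None} \<Longrightarrow> finite {q. Phi w q \<noteq> None}"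
  by (rule finite_subset[rotated]) (auto simp: Phi_def split: option.splits)

lemma proj_Phi:
  assumes "is_inf_word G w" "\<And>i. i \<notin> A \<Longrightarrow> blk i < m \<Longrightarrow> i < K"
  shows "proj m (Phi w) = map lift (filter (\<lambda>l. fst l \<notin> A \<and> blk (fst l) < m) (proj K w))"
proof -
  have "pos m (Phi w) = {q \<in> pos K w. fst (the (w q)) \<notin> A \<and> blk (fst (the (w q))) < m}"
  proof (rule equalityI; rule subsetI)
    fix q assume "q \<in> pos m (Phi w)"
    then obtain l' where l': "Phi w q = Some l'" "fst l' < m" unfolding pos_def by blast
    then obtain l where l: "w q = Some l" "fst l \<notin> A" "l' = lift l"
      by (auto simp: Phi_def split: option.splits if_splits)
    then have "blk (fst l) < m" using l' by (simp add: lift_def)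
    then have "fst l < K" using assms(2) l by blast
    then have "q \<in> pos K w" using l unfolding pos_def by blast
    then show "q \<in> {q \<in> pos K w. fst (the (w q)) \<notin> A \<and> blk (fst (the (w q))) < m}"
      using l \<open>blk (fst l) < m\<close> by simp
  next
    fix q assume q: "q \<in> {q \<in> pos K w. fst (the (w q)) \<notin> A \<and> blk (fst (the (w q))) < m}"
    then obtain l where l: "w q = Some l" unfolding pos_def by blast
    then have "Phi w q = Some (lift l)" "fst (lift l) < m" using q by (simp_all add: Phi_def lift_def)
    then show "q \<in> pos m (Phi w)" unfolding pos_def by blast
  qed
  moreover have "the (Phi w q) = lift (the (w q))" if "q \<in> pos K w" "fst (the (w q)) \<notin> A" for q
    using that by (auto simp: Phi_def pos_def)
  ultimately have "proj m (Phi w) = map lift (map (the \<circ> w) (sorted_list_of_set {q \<in> pos K w. fst (the (w q)) \<notin> A \<and> blk (fst (the (w q))) < m}))"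
    using finite_pos[OF assms(1), of K] by (simp add: proj_pos)
  also have "\<dots> = map lift (filter (\<lambda>l. fst l \<notin> A \<and> blk (fst l) < m) (proj K w))"
    using proj_sub[OF finite_pos[OF assms(1)], where C = "\<lambda>l. fst l \<notin> A \<and> blk (fst l) < m"] by simp
  finally show ?thesis .
qed

end


context arch
begin

definition F :: "(nat \<times> 'a) list \<Rightarrow> (nat \<times> (nat \<times> 'a) list set) list" where
  "F x = map lift (filter (\<lambda>l. fst l \<notin> A) x)"

lemma F_simps[simp]: "F [] = []" "F (x @ y) = F x @ F y"
  "F (l # x) = (if fst l \<in> A then F x else lift l # F x)"
  by (simp_all add: F_def)

lemma F_valid: "valid_word G x \<Longrightarrow> valid_word H (F x)"
  by (induction x) (auto simp: lift_valid)

lemma lift_mult: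
  assumes "valid_letter G (i,a)" "valid_letter G (i,b)" "i \<notin> A"
  shows "snd (lift (i,a)) \<otimes>\<^bsub>H (blk i)\<^esub> snd (lift (i,b)) = fw_class (P (blk i)) G [(i,a),(i,b)]"
proof -
  have "[(i,a)] \<in> words_over (P (blk i)) G" "[(i,b)] \<in> words_over (P (blk i)) G"
    using single_words_over assms by fastforce+
  then show ?thesis using fp_mult[OF _ _ groups] by (simp add: lift_def H_def)
qed

lemma lift_valid': "valid_letter G (i,a) \<Longrightarrow> i \<notin> A \<Longrightarrow> valid_letter H (lift (i,a))"
  using lift_valid[of "(i,a)"] by simp

lemma red_step_F:
  assumes "red_step G y z"
  shows "free_equiv H (F y) (F z)"
  using assms
proof cases
  case (merge ws us i a b)
  show ?thesis
  proof (cases "i \<in> A")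
    case True then show ?thesis using merge by simp
  next
    case False
    let ?n = "blk i"
    have m: "monoid (G i)" using groups group.is_monoid by blast
    have ab: "valid_letter G (i, a \<otimes>\<^bsub>G i\<^esub> b)" using merge m by (simp add: valid_letter_def monoid.m_closed)
    have "red_step G ([] @ (i,a) # (i,b) # []) ([] @ (i, a \<otimes>\<^bsub>G i\<^esub> b) # [])"
      by (rule red_step.merge) (use merge in simp_all)
    then have e: "fw_class (P ?n) G [(i,a),(i,b)] = fw_class (P ?n) G [(i, a \<otimes>\<^bsub>G i\<^esub> b)]"
      by (simp add: fw_class_eqI fe_step)
    have lm: "snd (lift (i,a)) \<otimes>\<^bsub>H ?n\<^esub> snd (lift (i,b)) = snd (lift (i, a \<otimes>\<^bsub>G i\<^esub> b))"
      using lift_mult[OF merge(5,6) False] e by (simp add: lift_def)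
    have ne: "snd (lift (i, a \<otimes>\<^bsub>G i\<^esub> b)) \<noteq> \<one>\<^bsub>H ?n\<^esub>"
      using lift_valid'[OF ab] False by (simp add: valid_letter_def lift_def)
    have "red_step H (F ws @ (?n, snd (lift (i,a))) # (?n, snd (lift (i,b))) # F us)
                    (F ws @ (?n, snd (lift (i,a)) \<otimes>\<^bsub>H ?n\<^esub> snd (lift (i,b))) # F us)"
      by (rule red_step.merge)
         (use merge F_valid lift_valid'[OF merge(5) False] lift_valid'[OF merge(6) False] lm ne
          in \<open>simp_all add: lift_def\<close>)
    then show ?thesis using merge False lm by (simp add: fe_step lift_def)
  qed
next
  case (cancel ws us i a b)
  show ?thesis
  proof (cases "i \<in> A")
    case True then show ?thesis using cancel by simp
  next
    case False
    let ?n = "blk i"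
    have "red_step G ([] @ (i,a) # (i,b) # []) ([] @ [])"
      by (rule red_step.cancel) (use cancel in simp_all)
    then have e: "fw_class (P ?n) G [(i,a),(i,b)] = fw_class (P ?n) G []"
      by (simp add: fw_class_eqI fe_step)
    have lm: "snd (lift (i,a)) \<otimes>\<^bsub>H ?n\<^esub> snd (lift (i,b)) = \<one>\<^bsub>H ?n\<^esub>"
      using lift_mult[OF cancel(5,6) False] e by (simp add: H_def fp_one)
    have "red_step H (F ws @ (?n, snd (lift (i,a))) # (?n, snd (lift (i,b))) # F us)
                    (F ws @ F us)"
      by (rule red_step.cancel)
         (use cancel F_valid lift_valid'[OF cancel(5) False] lift_valid'[OF cancel(6) False] lm
          in \<open>simp_all add: lift_def\<close>)
    then show ?thesis using cancel False by (simp add: fe_step lift_def)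
  qed
qed

lemma fe_F:
  assumes "free_equiv G x y"
  shows "free_equiv H (F x) (F y)"
  using assms
proof (rule fe_map_gen[where f = F and R = "free_equiv H"])
  fix y z assume "red_step G y z"
  then show "free_equiv H (F y) (F z)" by (rule red_step_F)
qed (rule fe_refl | erule (1) fe_trans | erule fe_sym)+

lemma proj_Phi_F:
  assumes "is_inf_word G w"
  shows "proj m (Phi w) = F (filter (\<lambda>l. blk (fst l) < m) (proj (kbound m) w))"
  using proj_Phi[OF assms, of m "kbound m"] kbound by (simp add: F_def conj_commute)

lemma Phi_ie:
  assumes "inf_equiv G w v" "is_inf_word G w" "is_inf_word G v"
  shows "inf_equiv H (Phi w) (Phi v)"
  unfolding inf_equiv_def
proof
  fix m
  have "free_equiv G (proj (kbound m) w) (proj (kbound m) v)" using assms(1) by (simp add: inf_equiv_def)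
  then have "free_equiv G (filter (\<lambda>l. blk (fst l) < m) (proj (kbound m) w)) (filter (\<lambda>l. blk (fst l) < m) (proj (kbound m) v))"
    by (rule fe_filter)
  then show "free_equiv H (proj m (Phi w)) (proj m (Phi v))"
    unfolding proj_Phi_F[OF assms(2)] proj_Phi_F[OF assms(3)] by (rule fe_F)
qed

end


context arch
begin

section \<open>The map Psi\<close>

definition rep :: "(nat \<times> 'a) list set \<Rightarrow> (nat \<times> 'a) list" where
  "rep U = (SOME x. x \<in> U)"

lemma carrier_rep:
  assumes "U \<in> carrier (H n)"
  shows "rep U \<in> words_over (P n) G" "fw_class (P n) G (rep U) = U"
proof -
  obtain x where x: "x \<in> words_over (P n) G" "U = fw_class (P n) G x"
    using assms by (auto simp: H_def fp_carrier)
  have r: "rep U \<in> fw_class (P n) G x" unfolding rep_def x(2) using fw_class_self[OF x(1)]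
    by (rule someI[of "\<lambda>y. y \<in> fw_class (P n) G x"])
  then show "rep U \<in> words_over (P n) G" by (simp add: fw_class_def)
  show "fw_class (P n) G (rep U) = U" using fw_class_eq[OF r] x(2) by simp
qed

lemma letter_rep:
  assumes "is_inf_word H v" "v q = Some L"
  shows "rep (snd L) \<in> words_over (P (fst L)) G" "fw_class (P (fst L)) G (rep (snd L)) = snd L"
    "snd L \<noteq> fw_class (P (fst L)) G []"
  using iw_valid[OF assms] carrier_rep[of "snd L" "fst L"]
  by (auto simp: valid_letter_def H_def fp_one)

definition ent :: "(rat \<Rightarrow> (nat \<times> (nat \<times> 'a) list set) option) \<Rightarrow> rat \<times> nat \<Rightarrow> (nat \<times> 'a) option" where
  "ent v x = (case v (fst x) of None \<Rightarrow> None
     | Some L \<Rightarrow> if snd x < length (rep (snd L)) then Some (rep (snd L) ! snd x) else None)"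

definition Psi :: "(rat \<Rightarrow> (nat \<times> (nat \<times> 'a) list set) option) \<Rightarrow> rat \<Rightarrow> (nat \<times> 'a) option" where
  "Psi v p = (if p \<in> range remb then ent v (inv_into UNIV remb p) else None)"

lemma inj_remb: "inj remb"
  using strict_mono_remb strict_mono_imp_inj_on by blast

lemma Psi_remb[simp]: "Psi v (remb x) = ent v x"
  by (simp add: Psi_def inj_remb)

lemma Psi_cases: "Psi v p \<noteq> None \<Longrightarrow> \<exists>x. p = remb x"
  by (auto simp: Psi_def split: if_splits)

lemma ent_SomeD:
  assumes "ent v x = Some l"
  obtains L where "v (fst x) = Some L" "snd x < length (rep (snd L))" "l = rep (snd L) ! snd x"
  using assms by (auto simp: ent_def split: option.splits if_splits)

lemma ent_letter:
  assumes "is_inf_word H v" "ent v x = Some l"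
  shows "valid_letter G l" "\<exists>L. v (fst x) = Some L \<and> fst l \<in> P (fst L)"
proof -
  obtain L where L: "v (fst x) = Some L" "snd x < length (rep (snd L))" "l = rep (snd L) ! snd x"
    using ent_SomeD[OF assms(2)] by blast
  have "rep (snd L) \<in> words_over (P (fst L)) G" using letter_rep[OF assms(1) L(1)] by blast
  moreover have "l \<in> set (rep (snd L))" using L by simp
  ultimately show "valid_letter G l" "\<exists>L. v (fst x) = Some L \<and> fst l \<in> P (fst L)"
    using L(1) by (auto simp: words_over_def valid_word_def)
qed

definition len :: "(rat \<Rightarrow> (nat \<times> (nat \<times> 'a) list set) option) \<Rightarrow> rat \<Rightarrow> nat" where
  "len v q = length (rep (snd (the (v q))))"

lemma finite_pairs:
  fixes f :: "'c \<Rightarrow> nat"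
  assumes "finite S"
  shows "finite {(q,j). q \<in> S \<and> j < f q}"
proof -
  have "{(q,j). q \<in> S \<and> j < f q} \<subseteq> (\<Union>q\<in>S. {q} \<times> {..<f q})" by auto
  moreover have "finite (\<Union>q\<in>S. {q} \<times> {..<f q})" by (intro finite_UN_I assms finite_SigmaI) simp_all
  ultimately show ?thesis by (rule finite_subset)
qed

lemma Psi_inf_word:
  assumes "is_inf_word H v"
  shows "is_inf_word G (Psi v)"
proof (rule iw_intro)
  fix p l assume pl: "Psi v p = Some l"
  then obtain x where "p = remb x" using Psi_cases by blast
  then show "valid_letter G l" using pl ent_letter[OF assms] by simp
next
  fix i
  let ?S = "{q. \<exists>L. v q = Some L \<and> fst L = blk i}"
  have "{p. \<exists>l. Psi v p = Some l \<and> fst l = i} \<subseteq> remb ` {(q,j). q \<in> ?S \<and> j < len v q}"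
  proof
    fix p assume "p \<in> {p. \<exists>l. Psi v p = Some l \<and> fst l = i}"
    then obtain l where pl: "Psi v p = Some l" "fst l = i" by blast
    then obtain x where px: "p = remb x" using Psi_cases by blast
    then have el: "ent v x = Some l" using pl by simp
    then obtain L where L: "v (fst x) = Some L" "snd x < length (rep (snd L))" "l = rep (snd L) ! snd x"
      by (rule ent_SomeD)
    obtain L' where "v (fst x) = Some L'" "fst l \<in> P (fst L')" using ent_letter(2)[OF assms el] by blast
    then have "fst L = blk i" using L pl blk_eq by simp
    then have "fst x \<in> ?S" using L(1) by (intro CollectI exI[of _ L] conjI)
    then have "x \<in> {(q,j). q \<in> ?S \<and> j < len v q}" using L by (cases x) (simp add: len_def)
    then show "p \<in> remb ` {(q,j). q \<in> ?S \<and> j < len v q}" using px by blast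
  qed
  moreover have "finite ?S" using iw_finite[OF assms] by blast
  then have "finite (remb ` {(q,j). q \<in> ?S \<and> j < len v q})" using finite_pairs by blast
  ultimately show "finite {p. \<exists>l. Psi v p = Some l \<and> fst l = i}" by (rule finite_subset)
qed

definition exp :: "(nat \<times> (nat \<times> 'a) list set) list \<Rightarrow> (nat \<times> 'a) list" where
  "exp xs = concat (map (\<lambda>L. rep (snd L)) xs)"

lemma exp_simps[simp]: "exp [] = []" "exp (x @ y) = exp x @ exp y" "exp (L # x) = rep (snd L) @ exp x"
  by (simp_all add: exp_def)

lemma map_ent_concat:
  assumes "\<forall>q\<in>set qs. v q \<noteq> None"
  shows "map (the \<circ> ent v) (concat (map (\<lambda>q. map (Pair q) [0..<len v q]) qs))
       = concat (map (\<lambda>q. rep (snd (the (v q)))) qs)"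
  using assms
proof (induction qs)
  case (Cons q qs)
  obtain L where L: "v q = Some L" using Cons.prems by auto
  have ll: "len v q = length (rep (snd L))" by (simp add: len_def L)
  have "map (the \<circ> ent v) (map (Pair q) [0..<len v q]) = map (\<lambda>j. the (ent v (q,j))) [0..<len v q]"
    by simp
  also have "\<dots> = map (\<lambda>j. rep (snd L) ! j) [0..<length (rep (snd L))]"
    unfolding ll by (rule map_cong) (auto simp: ent_def L)
  finally have "map (the \<circ> ent v) (map (Pair q) [0..<len v q]) = map (\<lambda>j. rep (snd L) ! j) [0..<length (rep (snd L))]" .
  then have a: "map (the \<circ> ent v) (map (Pair q) [0..<len v q]) = rep (snd (the (v q)))"
    by (simp add: L map_nth)
  have IH: "map (the \<circ> ent v) (concat (map (\<lambda>q. map (Pair q) [0..<len v q]) qs)) = concat (map (\<lambda>q. rep (snd (the (v q)))) qs)"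
    using Cons.prems by (intro Cons.IH) simp
  show ?case using a IH by (simp only: list.map(2) concat.simps(2) map_append)
qed simp

lemma proj_Psi:
  assumes "is_inf_word H v" "\<And>i. i < M \<Longrightarrow> i \<notin> A \<Longrightarrow> blk i < m"
  shows "proj M (Psi v) = filter (\<lambda>l. fst l < M) (exp (proj m v))"
proof -
  let ?T = "{(q,j). q \<in> pos m v \<and> j < len v q}"
  let ?C = "\<lambda>x. fst (the (ent v x)) < M"
  have fT: "finite ?T" using finite_pairs finite_pos[OF assms(1)] by blast
  have pe: "pos M (Psi v) = remb ` {x \<in> ?T. ?C x}"
  proof (rule equalityI; rule subsetI)
    fix p assume "p \<in> pos M (Psi v)"
    then obtain l where pl: "Psi v p = Some l" "fst l < M" unfolding pos_def by blast
    then obtain x where px: "p = remb x" using Psi_cases by blast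
    then have el: "ent v x = Some l" using pl by simp
    then obtain L where L: "v (fst x) = Some L" "snd x < length (rep (snd L))" "l = rep (snd L) ! snd x"
      by (rule ent_SomeD)
    obtain L' where L': "v (fst x) = Some L'" "fst l \<in> P (fst L')" using ent_letter(2)[OF assms(1) el] by blast
    have "blk (fst l) = fst L" using L L' blk_eq by simp
    moreover have "fst l \<notin> A" using L' P_notA by blast
    ultimately have "fst L < m" using assms(2) pl by fastforce
    then have "fst x \<in> pos m v" using L(1) unfolding pos_def by blast
    then have "x \<in> {x \<in> ?T. ?C x}" using L el pl by (cases x) (auto simp: len_def)
    then show "p \<in> remb ` {x \<in> ?T. ?C x}" using px by blast
  next
    fix p assume "p \<in> remb ` {x \<in> ?T. ?C x}"
    then obtain x where x: "p = remb x" "x \<in> ?T" "?C x" by blast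
    then obtain L where "v (fst x) = Some L" using x unfolding pos_def by (cases x) auto
    then have "ent v x = Some (rep (snd L) ! snd x)" using x by (cases x) (auto simp: ent_def len_def)
    then show "p \<in> pos M (Psi v)" using x unfolding pos_def
      by (intro CollectI exI[of _ "rep (snd L) ! snd x"] conjI) simp_all
  qed
  have qs: "\<forall>q\<in>set (sorted_list_of_set (pos m v)). v q \<noteq> None"
    using finite_pos[OF assms(1)] by (auto simp: pos_def)
  have "proj M (Psi v) = map (the \<circ> Psi v) (map remb (filter ?C (sorted_list_of_set ?T)))"
    unfolding proj_pos pe using sls_image[OF strict_mono_remb] fT sls_filter[OF fT] by simp
  also have "\<dots> = map (the \<circ> ent v) (filter ?C (sorted_list_of_set ?T))" by (simp add: comp_def)
  also have "\<dots> = filter (\<lambda>l. fst l < M) (map (the \<circ> ent v) (sorted_list_of_set ?T))"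
    by (simp add: filter_map comp_def)
  also have "\<dots> = filter (\<lambda>l. fst l < M) (map (the \<circ> ent v) (concat (map (\<lambda>q. map (Pair q) [0..<len v q]) (sorted_list_of_set (pos m v)))))"
    using sls_pairs[OF finite_pos[OF assms(1)], where f = "len v"] by simp
  also have "\<dots> = filter (\<lambda>l. fst l < M) (exp (proj m v))"
    unfolding map_ent_concat[OF qs] by (simp add: exp_def proj_pos comp_def)
  finally show ?thesis .
qed

end


context arch
begin

lemma valid_H_letter:
  assumes "valid_letter H L"
  shows "rep (snd L) \<in> words_over (P (fst L)) G" "fw_class (P (fst L)) G (rep (snd L)) = snd L"
    "snd L \<noteq> fw_class (P (fst L)) G []"
  using assms carrier_rep[of "snd L" "fst L"] by (auto simp: valid_letter_def H_def fp_one)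

lemma exp_valid: "valid_word H xs \<Longrightarrow> valid_word G (exp xs)"
  by (induction xs) (auto dest: valid_H_letter(1) simp: words_over_def)

lemma H_mult:
  assumes "valid_letter H (n,U)" "valid_letter H (n,V)"
  shows "U \<otimes>\<^bsub>H n\<^esub> V = fw_class (P n) G (rep U @ rep V)"
proof -
  have u: "rep U \<in> words_over (P n) G" "fw_class (P n) G (rep U) = U" using valid_H_letter[OF assms(1)] by simp_all
  have v: "rep V \<in> words_over (P n) G" "fw_class (P n) G (rep V) = V" using valid_H_letter[OF assms(2)] by simp_all
  show ?thesis using fp_mult[OF u(1) v(1) groups] u(2) v(2) by (simp add: H_def)
qed

lemma red_step_exp:
  assumes "red_step H y z"
  shows "free_equiv G (exp y) (exp z)"
  using assms
proof cases
  case (merge ws us n U V)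
  have vws: "valid_word G (exp ws)" "valid_word G (exp us)" using merge(3,4) by (simp_all add: exp_valid)
  have uv: "U \<otimes>\<^bsub>H n\<^esub> V = fw_class (P n) G (rep U @ rep V)" using H_mult merge(5,6) by blast
  have vuv: "valid_letter H (n, U \<otimes>\<^bsub>H n\<^esub> V)"
    using merge groupsH[of n] by (simp add: valid_letter_def group.is_monoid monoid.m_closed)
  have w: "rep U @ rep V \<in> words_over (P n) G"
    using valid_H_letter(1)[OF merge(5)] valid_H_letter(1)[OF merge(6)] words_over_append by simp
  have "fw_class (P n) G (rep U @ rep V) = fw_class (P n) G (rep (U \<otimes>\<^bsub>H n\<^esub> V))"
    using valid_H_letter(2)[OF vuv] uv by simp
  then have "free_equiv G (rep U @ rep V) (rep (U \<otimes>\<^bsub>H n\<^esub> V))" using fw_class_eqD[OF _ w] by blast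
  then have "free_equiv G (exp ws @ (rep U @ rep V) @ exp us) (exp ws @ rep (U \<otimes>\<^bsub>H n\<^esub> V) @ exp us)"
    by (rule fe_context[OF _ vws])
  then show ?thesis using merge by simp
next
  case (cancel ws us n U V)
  have vws: "valid_word G (exp ws)" "valid_word G (exp us)" using cancel(3,4) by (simp_all add: exp_valid)
  have uv: "U \<otimes>\<^bsub>H n\<^esub> V = fw_class (P n) G (rep U @ rep V)" using H_mult cancel(5,6) by blast
  have w: "rep U @ rep V \<in> words_over (P n) G"
    using valid_H_letter(1)[OF cancel(5)] valid_H_letter(1)[OF cancel(6)] words_over_append by simp
  have "fw_class (P n) G (rep U @ rep V) = fw_class (P n) G []"
    using cancel uv by (simp add: H_def fp_one)
  then have "free_equiv G (rep U @ rep V) []" using fw_class_eqD[OF _ w] by blast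
  then have "free_equiv G (exp ws @ (rep U @ rep V) @ exp us) (exp ws @ [] @ exp us)"
    by (rule fe_context[OF _ vws])
  then show ?thesis using cancel by simp
qed

lemma fe_exp:
  assumes "free_equiv H x y"
  shows "free_equiv G (exp x) (exp y)"
  using assms
proof (rule fe_map_gen[where f = exp and R = "free_equiv G"])
  fix y z assume "red_step H y z"
  then show "free_equiv G (exp y) (exp z)" by (rule red_step_exp)
qed (rule fe_refl | erule (1) fe_trans | erule fe_sym)+

lemma proj_Psi_b:
  assumes "is_inf_word H v"
  shows "proj M (Psi v) = filter (\<lambda>l. fst l < M) (exp (proj (bound M) v))"
  using proj_Psi[OF assms] bound by blast

lemma Psi_ie:
  assumes "inf_equiv H v v'" "is_inf_word H v" "is_inf_word H v'"
  shows "inf_equiv G (Psi v) (Psi v')"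
  unfolding inf_equiv_def
proof
  fix M
  have "free_equiv H (proj (bound M) v) (proj (bound M) v')" using assms(1) by (simp add: inf_equiv_def)
  then have "free_equiv G (exp (proj (bound M) v)) (exp (proj (bound M) v'))" by (rule fe_exp)
  then show "free_equiv G (proj M (Psi v)) (proj M (Psi v'))"
    unfolding proj_Psi_b[OF assms(2)] proj_Psi_b[OF assms(3)] by (rule fe_filter)
qed

lemma Psi_cw:
  assumes "is_inf_word H v" "is_inf_word H v'"
  shows "inf_equiv G (Psi (concat_word v v')) (concat_word (Psi v) (Psi v'))"
proof (rule ie_by_proj)
  fix M
  show "proj M (Psi (concat_word v v')) = proj M (concat_word (Psi v) (Psi v'))"
    using proj_Psi_b[OF cw_inf_word[OF assms]] proj_cw[OF assms] proj_Psi_b[OF assms(1)] proj_Psi_b[OF assms(2)]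
      proj_cw[OF Psi_inf_word[OF assms(1)] Psi_inf_word[OF assms(2)]]
    by simp
qed

lemma Psi_finite:
  assumes "finite {q. v q \<noteq> None}"
  shows "finite {p. Psi v p \<noteq> None}"
proof -
  have "{p. Psi v p \<noteq> None} \<subseteq> remb ` {(q,j). q \<in> {q. v q \<noteq> None} \<and> j < len v q}"
  proof
    fix p assume "p \<in> {p. Psi v p \<noteq> None}"
    then obtain x where px: "p = remb x" "ent v x \<noteq> None" using Psi_cases by fastforce
    then obtain l where "ent v x = Some l" by blast
    then obtain L where "v (fst x) = Some L" "snd x < length (rep (snd L))" by (rule ent_SomeD)
    then have "x \<in> {(q,j). q \<in> {q. v q \<noteq> None} \<and> j < len v q}" by (cases x) (simp add: len_def)
    then show "p \<in> remb ` {(q,j). q \<in> {q. v q \<noteq> None} \<and> j < len v q}" using px by blast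
  qed
  moreover have "finite (remb ` {(q,j). q \<in> {q. v q \<noteq> None} \<and> j < len v q})"
    using finite_pairs[OF assms] by blast
  ultimately show ?thesis by (rule finite_subset)
qed

end


context arch
begin

lemma lift_in: "i \<in> P n \<Longrightarrow> lift (i,g) = (n, fw_class (P n) G [(i,g)])"
  using blk_eq by (simp add: lift_def)

lemma map_lift_valid:
  assumes "x \<in> words_over (P n) G"
  shows "valid_word H (map lift x)"
  using assms P_notA by (auto simp: words_over_def valid_word_def intro!: lift_valid)

lemma lift_chain:
  assumes "x \<in> words_over (P n) G"
  shows "free_equiv H (map lift x)
     (if fw_class (P n) G x = fw_class (P n) G [] then [] else [(n, fw_class (P n) G x)])"
  using assms
proof (induction x rule: rev_induct)
  case Nil then show ?case by simp
next
  case (snoc l x)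
  obtain i g where l: "l = (i,g)" by fastforce
  have wx: "x \<in> words_over (P n) G" and wl: "[l] \<in> words_over (P n) G"
    using snoc.prems by (auto simp: words_over_def)
  have iP: "i \<in> P n" using wl l by (simp add: words_over_def)
  have vl: "valid_letter G l" using wl by (simp add: words_over_def)
  have ll: "lift l = (n, fw_class (P n) G [l])" using lift_in[OF iP] l by simp
  have vll: "valid_letter H (lift l)" using lift_valid vl P_notA iP l by simp
  let ?X = "fw_class (P n) G x"
  let ?Y = "fw_class (P n) G (x @ [l])"
  let ?L = "fw_class (P n) G [l]"
  let ?c = "if ?X = fw_class (P n) G [] then [] else [(n, ?X)]"
  have XL: "?X \<otimes>\<^bsub>H n\<^esub> ?L = ?Y" using fp_mult[OF wx wl groups] by (simp add: H_def)
  have Lne: "?L \<noteq> fw_class (P n) G []"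
    using fw_class_eqD[OF _ wl] single_not_trivial[OF vl groups] by blast
  have vc: "valid_word H ?c"
  proof (cases "?X = fw_class (P n) G []")
    case False then show ?thesis using wx by (simp add: valid_letter_def H_def fp_carrier fp_one)
  qed simp
  have "free_equiv H (map lift x @ [lift l]) (?c @ [lift l])"
    by (rule fe_append[OF snoc.IH[OF wx] fe_refl map_lift_valid[OF wx] _ groupsH]) (simp add: vll)
  moreover have "free_equiv H (?c @ [lift l]) (if ?Y = fw_class (P n) G [] then [] else [(n, ?Y)])"
  proof (cases "?X = fw_class (P n) G []")
    case True
    have "free_equiv G x []" using fw_class_eqD[OF True wx] .
    then have "free_equiv G (x @ [l]) ([] @ [l])"
      by (rule fe_append[OF _ fe_refl _ _ groups]) (use wx vl in \<open>simp_all add: words_over_def\<close>)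
    then have "?Y = ?L" by (simp add: fw_class_eqI)
    then show ?thesis using True Lne ll by simp
  next
    case False
    have vX: "valid_letter H (n, ?X)" using False wx by (simp add: valid_letter_def H_def fp_carrier fp_one)
    have vL: "valid_letter H (n, ?L)" using vll ll by simp
    show ?thesis
    proof (cases "?Y = fw_class (P n) G []")
      case True
      have "red_step H ([] @ (n, ?X) # (n, ?L) # []) ([] @ [])"
        by (rule red_step.cancel) (use vX vL XL True in \<open>simp_all add: H_def fp_one\<close>)
      then show ?thesis using False True ll by (simp add: fe_step)
    next
      case F2: False
      have "red_step H ([] @ (n, ?X) # (n, ?L) # []) ([] @ [(n, ?X \<otimes>\<^bsub>H n\<^esub> ?L)])"
        by (rule red_step.merge) (use vX vL XL F2 in \<open>simp_all add: H_def fp_one\<close>)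
      then show ?thesis using False F2 ll XL by (simp add: fe_step)
    qed
  qed
  ultimately have "free_equiv H (map lift x @ [lift l]) (if ?Y = fw_class (P n) G [] then [] else [(n, ?Y)])"
    by (rule fe_trans)
  then show ?case by simp
qed

lemma exp_notA:
  assumes "valid_word H xs" "l \<in> set (exp xs)"
  shows "fst l \<notin> A \<and> valid_letter G l"
  using assms
proof (induction xs)
  case (Cons L xs)
  have v: "valid_letter H L" "valid_word H xs" using Cons.prems by simp_all
  have r: "rep (snd L) \<in> words_over (P (fst L)) G" using valid_H_letter[OF v(1)] by simp
  show ?case
  proof (cases "l \<in> set (rep (snd L))")
    case True
    then have "fst l \<in> P (fst L)" "valid_letter G l" using r by (auto simp: words_over_def valid_word_def)
    then show ?thesis using P_notA by blast
  next
    case False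
    then show ?thesis using Cons.IH[OF v(2)] Cons.prems(2) by simp
  qed
qed simp

lemma map_lift_valid':
  assumes "\<And>l. l \<in> set y \<Longrightarrow> fst l \<notin> A \<and> valid_letter G l"
  shows "valid_word H (map lift y)"
  using assms lift_valid by (auto simp: valid_word_def)

lemma map_lift_exp:
  assumes "valid_word H xs"
  shows "free_equiv H (map lift (exp xs)) xs"
  using assms
proof (induction xs)
  case Nil then show ?case by simp
next
  case (Cons L xs)
  have v: "valid_letter H L" "valid_word H xs" using Cons.prems by simp_all
  obtain n U where L: "L = (n,U)" by fastforce
  have r: "rep U \<in> words_over (P n) G" "fw_class (P n) G (rep U) = U" "U \<noteq> fw_class (P n) G []"
    using valid_H_letter[OF v(1)] L by simp_all
  have "free_equiv H (map lift (rep U)) [(n, U)]" using lift_chain[OF r(1)] r(2,3) by simp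
  then have "free_equiv H (map lift (rep U) @ map lift (exp xs)) ([(n, U)] @ xs)"
    by (rule fe_append[OF _ Cons.IH[OF v(2)] map_lift_valid[OF r(1)] _ groupsH])
       (rule map_lift_valid', rule exp_notA[OF v(2)])
  then show ?case using L by simp
qed

lemma F_exp_filter:
  assumes "valid_word H xs"
  shows "F (filter (\<lambda>l. blk (fst l) < m) (filter (\<lambda>l. fst l < kbound m) (exp xs)))
       = map lift (exp (filter (\<lambda>L. fst L < m) xs))"
  using assms
proof (induction xs)
  case Nil then show ?case by simp
next
  case (Cons L xs)
  have v: "valid_letter H L" "valid_word H xs" using Cons.prems by simp_all
  have r: "rep (snd L) \<in> words_over (P (fst L)) G" using valid_H_letter[OF v(1)] by simp
  have inP: "\<forall>l\<in>set (rep (snd L)). fst l \<in> P (fst L)" using r by (simp add: words_over_def)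
  have e: "F (filter (\<lambda>l. blk (fst l) < m) (filter (\<lambda>l. fst l < kbound m) (rep (snd L))))
     = (if fst L < m then map lift (rep (snd L)) else [])"
  proof (cases "fst L < m")
    case True
    have "filter (\<lambda>l. fst l < kbound m) (rep (snd L)) = rep (snd L)"
      using inP True blk_eq P_notA kbound by (auto intro!: filter_True)
    moreover have "filter (\<lambda>l. blk (fst l) < m) (rep (snd L)) = rep (snd L)"
      using inP True blk_eq by (auto intro!: filter_True)
    moreover have "filter (\<lambda>l. fst l \<notin> A) (rep (snd L)) = rep (snd L)"
      using inP P_notA by (auto intro!: filter_True)
    ultimately show ?thesis using True by (simp add: F_def)
  next
    case False
    have "filter (\<lambda>l. blk (fst l) < m) (filter (\<lambda>l. fst l < kbound m) (rep (snd L))) = []"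
      using inP False blk_eq by (auto simp: filter_empty_conv)
    then show ?thesis using False by simp
  qed
  show ?case using e Cons.IH[OF v(2)] by (simp add: F_def)
qed

lemma Phi_Psi:
  assumes "is_inf_word H v"
  shows "inf_equiv H (Phi (Psi v)) v"
  unfolding inf_equiv_def
proof
  fix m
  let ?K = "kbound m"
  let ?m' = "max m (bound ?K)"
  have pv: "is_inf_word G (Psi v)" using Psi_inf_word[OF assms] .
  have "proj ?K (Psi v) = filter (\<lambda>l. fst l < ?K) (exp (proj ?m' v))"
    by (rule proj_Psi[OF assms]) (use bound in \<open>fastforce\<close>)
  then have "proj m (Phi (Psi v)) = F (filter (\<lambda>l. blk (fst l) < m) (filter (\<lambda>l. fst l < ?K) (exp (proj ?m' v))))"
    using proj_Phi_F[OF pv] by simp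
  also have "\<dots> = map lift (exp (filter (\<lambda>L. fst L < m) (proj ?m' v)))"
    by (rule F_exp_filter[OF proj_valid[OF assms]])
  also have "\<dots> = map lift (exp (proj m v))"
    using proj_mono[OF assms, of m ?m'] by simp
  finally show "free_equiv H (proj m (Phi (Psi v))) (proj m v)"
    using map_lift_exp[OF proj_valid[OF assms]] by simp
qed

definition dropA :: "(rat \<Rightarrow> (nat \<times> 'a) option) \<Rightarrow> rat \<Rightarrow> (nat \<times> 'a) option" where
  "dropA w q = (case w q of None \<Rightarrow> None | Some l \<Rightarrow> if fst l \<in> A then None else Some l)"

lemma dropA_inf_word:
  assumes "is_inf_word G w"
  shows "is_inf_word G (dropA w)"
proof (rule iw_intro)
  fix q l assume "dropA w q = Some l"
  then have "w q = Some l" by (auto simp: dropA_def split: option.splits if_splits)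
  then show "valid_letter G l" by (rule iw_valid[OF assms])
next
  fix n
  have "{q. \<exists>l. dropA w q = Some l \<and> fst l = n} \<subseteq> {q. \<exists>l. w q = Some l \<and> fst l = n}"
    by (auto simp: dropA_def split: option.splits if_splits)
  then show "finite {q. \<exists>l. dropA w q = Some l \<and> fst l = n}"
    using iw_finite[OF assms] by (rule finite_subset)
qed

lemma proj_dropA:
  assumes "is_inf_word G w" "M \<le> K"
  shows "proj M (dropA w) = filter (\<lambda>l. fst l < M \<and> fst l \<notin> A) (proj K w)"
proof -
  have "pos M (dropA w) = {q \<in> pos K w. fst (the (w q)) < M \<and> fst (the (w q)) \<notin> A}"
  proof (rule equalityI; rule subsetI)
    fix q assume "q \<in> pos M (dropA w)"
    then obtain l where l: "dropA w q = Some l" "fst l < M" unfolding pos_def by blast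
    then have wl: "w q = Some l" "fst l \<notin> A" by (auto simp: dropA_def split: option.splits if_splits)
    have "q \<in> pos K w" unfolding pos_def using wl l assms(2) by (intro CollectI exI[of _ l] conjI) simp_all
    then show "q \<in> {q \<in> pos K w. fst (the (w q)) < M \<and> fst (the (w q)) \<notin> A}" using wl l by simp
  next
    fix q assume q: "q \<in> {q \<in> pos K w. fst (the (w q)) < M \<and> fst (the (w q)) \<notin> A}"
    then obtain l where wl: "w q = Some l" unfolding pos_def by blast
    then have "dropA w q = Some l" "fst l < M" using q by (simp_all add: dropA_def)
    then show "q \<in> pos M (dropA w)" unfolding pos_def by (intro CollectI exI[of _ l] conjI)
  qed
  moreover have "the (dropA w q) = the (w q)" if "q \<in> pos K w" "fst (the (w q)) \<notin> A" for q
    using that by (auto simp: dropA_def pos_def)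
  ultimately have "proj M (dropA w) = map (the \<circ> w) (sorted_list_of_set {q \<in> pos K w. fst (the (w q)) < M \<and> fst (the (w q)) \<notin> A})"
    using finite_pos[OF assms(1), of K] by (simp add: proj_pos)
  then show ?thesis
    using proj_sub[OF finite_pos[OF assms(1)], where C = "\<lambda>l. fst l < M \<and> fst l \<notin> A"] by simp
qed

lemma exp_map_lift:
  assumes "valid_word G ys" "\<forall>l\<in>set ys. fst l \<notin> A"
  shows "free_equiv G (exp (map lift ys)) ys"
  using assms
proof (induction ys)
  case Nil then show ?case by simp
next
  case (Cons l ys)
  have vl: "valid_letter G l" "fst l \<notin> A" using Cons.prems by simp_all
  have vL: "valid_letter H (lift l)" using lift_valid[OF vl] .
  have w: "rep (snd (lift l)) \<in> words_over (P (blk (fst l))) G"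
    "fw_class (P (blk (fst l))) G (rep (snd (lift l))) = fw_class (P (blk (fst l))) G [l]"
    using valid_H_letter[OF vL] by (simp_all add: lift_def)
  have "free_equiv G (rep (snd (lift l))) [l]" using fw_class_eqD[OF w(2) w(1)] .
  then have "free_equiv G (rep (snd (lift l)) @ exp (map lift ys)) ([l] @ ys)"
  proof (rule fe_append[OF _ Cons.IH _ _ groups])
    show "valid_word G ys" "\<forall>l\<in>set ys. fst l \<notin> A" using Cons.prems by simp_all
    show "valid_word G (rep (snd (lift l)))" using w(1) by (simp add: words_over_def)
    have "valid_word H (map lift ys)" by (rule map_lift_valid') (use Cons.prems in \<open>auto simp: valid_word_def\<close>)
    then show "valid_word G (exp (map lift ys))" by (rule exp_valid)
  qed
  then show ?case by simp
qed

lemma Psi_Phi: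
  assumes "is_inf_word G w"
  shows "inf_equiv G (Psi (Phi w)) (dropA w)"
  unfolding inf_equiv_def
proof
  fix M
  let ?m = "bound M"
  let ?K = "max (kbound ?m) M"
  let ?ys = "filter (\<lambda>l. fst l \<notin> A \<and> blk (fst l) < ?m) (proj ?K w)"
  have pw: "is_inf_word H (Phi w)" using Phi_inf_word[OF assms] .
  have "proj M (Psi (Phi w)) = filter (\<lambda>l. fst l < M) (exp (proj ?m (Phi w)))"
    by (rule proj_Psi_b[OF pw])
  also have "proj ?m (Phi w) = map lift ?ys"
    by (rule proj_Phi[OF assms]) (use kbound in \<open>fastforce\<close>)
  finally have e: "proj M (Psi (Phi w)) = filter (\<lambda>l. fst l < M) (exp (map lift ?ys))" .
  have vys: "valid_word G ?ys" using proj_valid[OF assms, of ?K] by (simp add: valid_word_def)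
  have "free_equiv G (exp (map lift ?ys)) ?ys" by (rule exp_map_lift[OF vys]) simp
  then have "free_equiv G (filter (\<lambda>l. fst l < M) (exp (map lift ?ys))) (filter (\<lambda>l. fst l < M) ?ys)"
    by (rule fe_filter)
  moreover have "filter (\<lambda>l. fst l < M) ?ys = proj M (dropA w)"
    unfolding proj_dropA[OF assms, of M ?K, simplified] using bound
    by (auto intro!: filter_cong)
  ultimately show "free_equiv G (proj M (Psi (Phi w))) (proj M (dropA w))" using e by simp
qed

end


section \<open>Normal closures\<close>

lemma nc_normal:
  assumes "group K" "S \<subseteq> carrier K"
  shows "normal_closure K S \<lhd> K"
proof -
  interpret K: group K by fact
  let ?F = "{N. N \<lhd> K \<and> S \<subseteq> N}"
  have cK: "carrier K \<in> ?F" using assms K.normal_invI K.subgroup_self by (auto intro: K.normal_invI)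
  have sg: "subgroup (\<Inter>?F) K"
    by (rule K.subgroups_Inter) (use cK in \<open>auto simp: normal_def\<close>)
  have "\<forall>x\<in>carrier K. \<forall>h\<in>\<Inter>?F. x \<otimes>\<^bsub>K\<^esub> h \<otimes>\<^bsub>K\<^esub> inv\<^bsub>K\<^esub> x \<in> \<Inter>?F"
  proof (intro ballI InterI)
    fix x h N assume x: "x \<in> carrier K" and h: "h \<in> \<Inter>?F" and N: "N \<in> ?F"
    then have "h \<in> N" "N \<lhd> K" by auto
    then show "x \<otimes>\<^bsub>K\<^esub> h \<otimes>\<^bsub>K\<^esub> inv\<^bsub>K\<^esub> x \<in> N" using x K.normal_inv_iff by blast
  qed
  then show ?thesis unfolding normal_closure_def using sg K.normal_inv_iff by blast
qed

lemma nc_sub: "group K \<Longrightarrow> S \<subseteq> carrier K \<Longrightarrow> S \<subseteq> normal_closure K S"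
  unfolding normal_closure_def by blast

lemma nc_min: "N \<lhd> K \<Longrightarrow> S \<subseteq> N \<Longrightarrow> normal_closure K S \<subseteq> N"
  unfolding normal_closure_def by blast

lemma normal_preimage:
  assumes "group K" "group L" "h \<in> hom K L" "N \<lhd> L"
  shows "{x \<in> carrier K. h x \<in> N} \<lhd> K"
proof -
  interpret K: group K by fact
  interpret L: group L by fact
  interpret hh: group_hom K L h by (rule group_hom.intro) (use assms in \<open>simp_all add: group_hom_axioms_def\<close>)
  have sN: "subgroup N L" using assms(4) by (simp add: normal_def)
  have "subgroup {x \<in> carrier K. h x \<in> N} K"
  proof (rule K.subgroupI)
    show "{x \<in> carrier K. h x \<in> N} \<noteq> {}" using subgroup.one_closed[OF sN] K.one_closed by auto
  next
    fix a assume "a \<in> {x \<in> carrier K. h x \<in> N}"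
    then show "inv\<^bsub>K\<^esub> a \<in> {x \<in> carrier K. h x \<in> N}" using subgroup.m_inv_closed[OF sN] by auto
  next
    fix a b assume "a \<in> {x \<in> carrier K. h x \<in> N}" "b \<in> {x \<in> carrier K. h x \<in> N}"
    then show "a \<otimes>\<^bsub>K\<^esub> b \<in> {x \<in> carrier K. h x \<in> N}" using subgroup.m_closed[OF sN] by auto
  qed auto
  moreover have "\<forall>x\<in>carrier K. \<forall>y\<in>{x \<in> carrier K. h x \<in> N}. x \<otimes>\<^bsub>K\<^esub> y \<otimes>\<^bsub>K\<^esub> inv\<^bsub>K\<^esub> x \<in> {x \<in> carrier K. h x \<in> N}"
  proof (intro ballI)
    fix x y assume x: "x \<in> carrier K" and y: "y \<in> {x \<in> carrier K. h x \<in> N}"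
    have "h (x \<otimes>\<^bsub>K\<^esub> y \<otimes>\<^bsub>K\<^esub> inv\<^bsub>K\<^esub> x) = h x \<otimes>\<^bsub>L\<^esub> h y \<otimes>\<^bsub>L\<^esub> inv\<^bsub>L\<^esub> h x"
      using x y by simp
    moreover have "h x \<otimes>\<^bsub>L\<^esub> h y \<otimes>\<^bsub>L\<^esub> inv\<^bsub>L\<^esub> h x \<in> N"
      using assms(4) L.normal_inv_iff x y by auto
    ultimately show "x \<otimes>\<^bsub>K\<^esub> y \<otimes>\<^bsub>K\<^esub> inv\<^bsub>K\<^esub> x \<in> {x \<in> carrier K. h x \<in> N}" using x y by simp
  qed
  ultimately show ?thesis using K.normal_inv_iff by blast
qed

lemma nc_hom:
  assumes "group K" "group L" "h \<in> hom K L" "S \<subseteq> carrier K" "T \<subseteq> carrier L" "h ` S \<subseteq> T"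
  shows "h ` normal_closure K S \<subseteq> normal_closure L T"
proof -
  have "{x \<in> carrier K. h x \<in> normal_closure L T} \<lhd> K"
    by (rule normal_preimage[OF assms(1-3) nc_normal[OF assms(2,5)]])
  moreover have "S \<subseteq> {x \<in> carrier K. h x \<in> normal_closure L T}"
    using assms(4,6) nc_sub[OF assms(2,5)] by auto
  ultimately have "normal_closure K S \<subseteq> {x \<in> carrier K. h x \<in> normal_closure L T}" by (rule nc_min)
  then show ?thesis by auto
qed


definition restr :: "rat set \<Rightarrow> (rat \<Rightarrow> 'c option) \<Rightarrow> rat \<Rightarrow> 'c option" where
  "restr D w p = (if p \<in> D then w p else None)"

lemma restr_inf_word:
  assumes "is_inf_word G w"
  shows "is_inf_word G (restr D w)"
proof (rule iw_intro)
  fix q l assume "restr D w q = Some l"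
  then have "w q = Some l" by (auto simp: restr_def split: if_splits)
  then show "valid_letter G l" by (rule iw_valid[OF assms])
next
  fix n
  have "{q. \<exists>l. restr D w q = Some l \<and> fst l = n} \<subseteq> {q. \<exists>l. w q = Some l \<and> fst l = n}"
    by (auto simp: restr_def split: if_splits)
  then show "finite {q. \<exists>l. restr D w q = Some l \<and> fst l = n}"
    using iw_finite[OF assms] by (rule finite_subset)
qed

lemma pos_restr: "pos m (restr D w) = pos m w \<inter> D"
  by (auto simp: pos_def restr_def split: if_splits)

lemma proj_restr:
  assumes "is_inf_word G w"
  shows "proj m (restr D w) = map (the \<circ> w) (sorted_list_of_set (pos m w \<inter> D))"
proof -
  have "proj m (restr D w) = map (the \<circ> restr D w) (sorted_list_of_set (pos m w \<inter> D))"
    by (simp add: proj_pos pos_restr)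
  also have "\<dots> = map (the \<circ> w) (sorted_list_of_set (pos m w \<inter> D))"
    using finite_pos[OF assms, of m] by (intro map_cong) (auto simp: restr_def)
  finally show ?thesis .
qed

lemma proj_split:
  assumes "is_inf_word G w" "\<And>x y. x \<in> D \<Longrightarrow> y \<notin> D \<Longrightarrow> x < y"
  shows "proj m w = proj m (restr D w) @ proj m (restr (-D) w)"
proof -
  have f: "finite (pos m w \<inter> D)" "finite (pos m w \<inter> -D)" using finite_pos[OF assms(1), of m] by auto
  have "pos m w = (pos m w \<inter> D) \<union> (pos m w \<inter> -D)" by blast
  then have "sorted_list_of_set (pos m w) = sorted_list_of_set (pos m w \<inter> D) @ sorted_list_of_set (pos m w \<inter> -D)"
    using sls_append[OF f] assms(2) by auto
  then show ?thesis using proj_restr[OF assms(1)] by (simp add: proj_pos)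
qed

lemma class_split:
  assumes "is_inf_word G w" "\<And>x y. x \<in> D \<Longrightarrow> y \<notin> D \<Longrightarrow> x < y" and grp: "\<And>i. group (G i)"
  shows "iw_class G w = iw_class G (restr D w) \<otimes>\<^bsub>top_prod G\<^esub> iw_class G (restr (-D) w)"
proof -
  have r: "is_inf_word G (restr D w)" "is_inf_word G (restr (-D) w)" using restr_inf_word assms(1) by blast+
  have "inf_equiv G w (concat_word (restr D w) (restr (-D) w))"
    by (rule ie_by_proj) (simp add: proj_cw[OF r] proj_split[OF assms(1,2)])
  then show ?thesis using tp_mult[OF r grp] by (simp add: iw_class_eqI)
qed

definition NC :: "(nat \<Rightarrow> ('a, 'b) monoid_scheme) \<Rightarrow> (rat \<Rightarrow> (nat \<times> 'a) option) set set" where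
  "NC G = normal_closure (top_prod G) (free_prod_sub G)"

lemma fps_carrier: "free_prod_sub G \<subseteq> carrier (top_prod G)"
  by (auto simp: free_prod_sub_def tp_carrier)

lemma NC_normal: "(\<And>i. group (G i)) \<Longrightarrow> NC G \<lhd> top_prod G"
  unfolding NC_def by (rule nc_normal[OF group_top_prod fps_carrier])

lemma del_one:
  assumes "is_inf_word G w" and grp: "\<And>i. group (G i)"
  shows "iw_class G (restr (-{q}) w) \<otimes>\<^bsub>top_prod G\<^esub> inv\<^bsub>top_prod G\<^esub> (iw_class G w) \<in> NC G"
proof -
  interpret T: group "top_prod G" using group_top_prod grp by blast
  have nN: "NC G \<lhd> top_prod G" using NC_normal grp by blast
  then have sN: "subgroup (NC G) (top_prod G)" unfolding normal_def by blast
  let ?D1 = "{p. p < q}" and ?D2 = "{p. p \<le> q}"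
  let ?r = "restr (-?D1) w"
  have ri: "is_inf_word G ?r" using restr_inf_word assms by blast
  let ?a = "iw_class G (restr ?D1 w)" and ?s = "iw_class G (restr ?D2 ?r)" and ?b = "iw_class G (restr (-?D2) ?r)"
  have ca: "?a \<in> carrier (top_prod G)" "?s \<in> carrier (top_prod G)" "?b \<in> carrier (top_prod G)"
    using restr_inf_word assms ri by (auto simp: tp_carrier)
  have e1: "iw_class G w = ?a \<otimes>\<^bsub>top_prod G\<^esub> iw_class G ?r"
    by (rule class_split[OF assms(1) _ grp]) auto
  have e2: "iw_class G ?r = ?s \<otimes>\<^bsub>top_prod G\<^esub> ?b"
    by (rule class_split[OF ri _ grp]) auto
  let ?d = "restr (-{q}) w"
  have di: "is_inf_word G ?d" using restr_inf_word assms by blast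
  have "restr ?D1 ?d = restr ?D1 w" by (rule ext) (simp add: restr_def)
  moreover have "restr (-?D1) ?d = restr (-?D2) ?r" by (rule ext) (auto simp: restr_def)
  ultimately have e3: "iw_class G ?d = ?a \<otimes>\<^bsub>top_prod G\<^esub> ?b"
    using class_split[OF di _ grp, of ?D1] by simp
  have "finite {p. restr ?D2 ?r p \<noteq> None}"
    by (rule finite_subset[of _ "{q}"]) (auto simp: restr_def split: if_splits)
  then have "?s \<in> free_prod_sub G" using restr_inf_word[OF ri] by (auto simp: free_prod_sub_def)
  then have sN': "?s \<in> NC G" using nc_sub[OF _ fps_carrier] T.is_group by (auto simp: NC_def)
  have h: "\<And>x y. x \<in> carrier (top_prod G) \<Longrightarrow> y \<in> carrier (top_prod G) \<Longrightarrow>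
     x \<otimes>\<^bsub>top_prod G\<^esub> (inv\<^bsub>top_prod G\<^esub> x \<otimes>\<^bsub>top_prod G\<^esub> y) = y"
    by (simp add: T.m_assoc[symmetric])
  have "iw_class G ?d \<otimes>\<^bsub>top_prod G\<^esub> inv\<^bsub>top_prod G\<^esub> (iw_class G w)
      = ?a \<otimes>\<^bsub>top_prod G\<^esub> ?b \<otimes>\<^bsub>top_prod G\<^esub> (inv\<^bsub>top_prod G\<^esub> ?b \<otimes>\<^bsub>top_prod G\<^esub> inv\<^bsub>top_prod G\<^esub> ?s \<otimes>\<^bsub>top_prod G\<^esub> inv\<^bsub>top_prod G\<^esub> ?a)"
    unfolding e3 e1 e2 using ca by (simp add: T.inv_mult_group T.m_assoc)
  also have "\<dots> = ?a \<otimes>\<^bsub>top_prod G\<^esub> (?b \<otimes>\<^bsub>top_prod G\<^esub> inv\<^bsub>top_prod G\<^esub> ?b) \<otimes>\<^bsub>top_prod G\<^esub> inv\<^bsub>top_prod G\<^esub> ?s \<otimes>\<^bsub>top_prod G\<^esub> inv\<^bsub>top_prod G\<^esub> ?a"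
    using ca by (simp add: T.m_assoc h)
  also have "\<dots> = ?a \<otimes>\<^bsub>top_prod G\<^esub> inv\<^bsub>top_prod G\<^esub> ?s \<otimes>\<^bsub>top_prod G\<^esub> inv\<^bsub>top_prod G\<^esub> ?a"
    using ca by simp
  also have "\<dots> \<in> NC G"
    using nN ca sN' subgroup.m_inv_closed[OF sN sN'] T.normal_inv_iff by blast
  finally show ?thesis .
qed

lemma del_finite:
  assumes "finite F" "is_inf_word G w" and grp: "\<And>i. group (G i)"
  shows "iw_class G (restr (-F) w) \<otimes>\<^bsub>top_prod G\<^esub> inv\<^bsub>top_prod G\<^esub> (iw_class G w) \<in> NC G"
  using assms(1)
proof (induction F rule: finite_induct)
  interpret T: group "top_prod G" using group_top_prod grp by blast
  have "NC G \<lhd> top_prod G" using NC_normal grp by blast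
  then have sN: "subgroup (NC G) (top_prod G)" unfolding normal_def by blast
  {
    case empty
    have "restr (-{}) w = w" by (rule ext) (simp add: restr_def)
    moreover have "iw_class G w \<in> carrier (top_prod G)" using assms(2) by (auto simp: tp_carrier)
    ultimately show ?case using subgroup.one_closed[OF sN] by simp
  next
    case (insert q F)
    let ?w' = "restr (-F) w"
    have wi: "is_inf_word G ?w'" using restr_inf_word assms(2) by blast
    have "restr (- insert q F) w = restr (-{q}) ?w'" by (rule ext) (simp add: restr_def)
    moreover have x1: "iw_class G (restr (-{q}) ?w') \<otimes>\<^bsub>top_prod G\<^esub> inv\<^bsub>top_prod G\<^esub> (iw_class G ?w') \<in> NC G"
      by (rule del_one[OF wi grp])
    moreover have c: "iw_class G (restr (-{q}) ?w') \<in> carrier (top_prod G)" "iw_class G ?w' \<in> carrier (top_prod G)"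
      "iw_class G w \<in> carrier (top_prod G)"
      using restr_inf_word wi assms(2) by (auto simp: tp_carrier)
    have "(iw_class G (restr (-{q}) ?w') \<otimes>\<^bsub>top_prod G\<^esub> inv\<^bsub>top_prod G\<^esub> (iw_class G ?w'))
        \<otimes>\<^bsub>top_prod G\<^esub> (iw_class G ?w' \<otimes>\<^bsub>top_prod G\<^esub> inv\<^bsub>top_prod G\<^esub> (iw_class G w))
      = iw_class G (restr (-{q}) ?w') \<otimes>\<^bsub>top_prod G\<^esub> inv\<^bsub>top_prod G\<^esub> (iw_class G w)"
      using c by (simp add: T.m_assoc[symmetric]) (simp add: T.m_assoc)
    ultimately show ?case using insert.IH subgroup.m_closed[OF sN x1 insert.IH] by simp
  }
qed


context arch
begin

definition PhiH :: "(rat \<Rightarrow> (nat \<times> 'a) option) set \<Rightarrow> (rat \<Rightarrow> (nat \<times> (nat \<times> 'a) list set) option) set" where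
  "PhiH U = iw_class H (Phi (SOME w. w \<in> U))"

definition PsiH :: "(rat \<Rightarrow> (nat \<times> (nat \<times> 'a) list set) option) set \<Rightarrow> (rat \<Rightarrow> (nat \<times> 'a) option) set" where
  "PsiH V = iw_class G (Psi (SOME v. v \<in> V))"

lemma PhiH_class:
  assumes "is_inf_word G w"
  shows "PhiH (iw_class G w) = iw_class H (Phi w)"
proof -
  let ?x = "SOME x. x \<in> iw_class G w"
  have "is_inf_word G ?x" "inf_equiv G w ?x" using iw_rep[OF assms] by simp_all
  then have "inf_equiv H (Phi w) (Phi ?x)" using Phi_ie assms by blast
  then show ?thesis unfolding PhiH_def using iw_class_eqI ie_sym by metis
qed

lemma PsiH_class:
  assumes "is_inf_word H v"
  shows "PsiH (iw_class H v) = iw_class G (Psi v)"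
proof -
  let ?x = "SOME x. x \<in> iw_class H v"
  have "is_inf_word H ?x" "inf_equiv H v ?x" using iw_rep[OF assms] by simp_all
  then have "inf_equiv G (Psi v) (Psi ?x)" using Psi_ie assms by blast
  then show ?thesis unfolding PsiH_def using iw_class_eqI ie_sym by metis
qed

lemma PhiH_hom: "PhiH \<in> hom (top_prod G) (top_prod H)"
proof (rule homI)
  fix U assume "U \<in> carrier (top_prod G)"
  then obtain w where w: "is_inf_word G w" "U = iw_class G w" by (auto simp: tp_carrier)
  then show "PhiH U \<in> carrier (top_prod H)" using PhiH_class Phi_inf_word by (auto simp: tp_carrier)
next
  fix U V assume "U \<in> carrier (top_prod G)" "V \<in> carrier (top_prod G)"
  then obtain w v where w: "is_inf_word G w" "U = iw_class G w" "is_inf_word G v" "V = iw_class G v"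
    by (auto simp: tp_carrier)
  have "PhiH (U \<otimes>\<^bsub>top_prod G\<^esub> V) = iw_class H (Phi (concat_word w v))"
    using w tp_mult[OF w(1,3) groups] PhiH_class[OF cw_inf_word[OF w(1,3)]] by simp
  also have "\<dots> = PhiH U \<otimes>\<^bsub>top_prod H\<^esub> PhiH V"
    using w tp_mult[OF Phi_inf_word[OF w(1)] Phi_inf_word[OF w(3)] groupsH] PhiH_class by (simp add: Phi_cw)
  finally show "PhiH (U \<otimes>\<^bsub>top_prod G\<^esub> V) = PhiH U \<otimes>\<^bsub>top_prod H\<^esub> PhiH V" .
qed

lemma PsiH_hom: "PsiH \<in> hom (top_prod H) (top_prod G)"
proof (rule homI)
  fix U assume "U \<in> carrier (top_prod H)"
  then obtain w where w: "is_inf_word H w" "U = iw_class H w" by (auto simp: tp_carrier)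
  then show "PsiH U \<in> carrier (top_prod G)" using PsiH_class Psi_inf_word by (auto simp: tp_carrier)
next
  fix U V assume "U \<in> carrier (top_prod H)" "V \<in> carrier (top_prod H)"
  then obtain w v where w: "is_inf_word H w" "U = iw_class H w" "is_inf_word H v" "V = iw_class H v"
    by (auto simp: tp_carrier)
  have "PsiH (U \<otimes>\<^bsub>top_prod H\<^esub> V) = iw_class G (Psi (concat_word w v))"
    using w tp_mult[OF w(1,3) groupsH] PsiH_class[OF cw_inf_word[OF w(1,3)]] by simp
  also have "\<dots> = iw_class G (concat_word (Psi w) (Psi v))"
    using Psi_cw[OF w(1,3)] by (rule iw_class_eqI)
  also have "\<dots> = PsiH U \<otimes>\<^bsub>top_prod G\<^esub> PsiH V"
    using w tp_mult[OF Psi_inf_word[OF w(1)] Psi_inf_word[OF w(3)] groups] PsiH_class by simp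
  finally show "PsiH (U \<otimes>\<^bsub>top_prod H\<^esub> V) = PsiH U \<otimes>\<^bsub>top_prod G\<^esub> PsiH V" .
qed

lemma PhiH_fps: "PhiH ` free_prod_sub G \<subseteq> free_prod_sub H"
proof
  fix X assume "X \<in> PhiH ` free_prod_sub G"
  then obtain w where w: "is_inf_word G w" "finite {q. w q \<noteq> None}" "X = PhiH (iw_class G w)"
    by (auto simp: free_prod_sub_def)
  then show "X \<in> free_prod_sub H"
    using PhiH_class Phi_inf_word Phi_finite by (auto simp: free_prod_sub_def)
qed

lemma PsiH_fps: "PsiH ` free_prod_sub H \<subseteq> free_prod_sub G"
proof
  fix X assume "X \<in> PsiH ` free_prod_sub H"
  then obtain w where w: "is_inf_word H w" "finite {q. w q \<noteq> None}" "X = PsiH (iw_class H w)"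
    by (auto simp: free_prod_sub_def)
  then show "X \<in> free_prod_sub G"
    using PsiH_class Psi_inf_word Psi_finite by (auto simp: free_prod_sub_def)
qed

lemma NG_NH: "PhiH ` NC G \<subseteq> NC H"
  unfolding NC_def
  by (rule nc_hom[OF group_top_prod[OF groups] group_top_prod[OF groupsH] PhiH_hom fps_carrier fps_carrier PhiH_fps])

lemma NH_NG: "PsiH ` NC H \<subseteq> NC G"
  unfolding NC_def
  by (rule nc_hom[OF group_top_prod[OF groupsH] group_top_prod[OF groups] PsiH_hom fps_carrier fps_carrier PsiH_fps])

lemma PhiH_PsiH:
  assumes "V \<in> carrier (top_prod H)"
  shows "PhiH (PsiH V) = V"
proof -
  obtain v where v: "is_inf_word H v" "V = iw_class H v" using assms by (auto simp: tp_carrier)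
  then show ?thesis using PsiH_class PhiH_class Psi_inf_word iw_class_eqI[OF Phi_Psi[OF v(1)]] by simp
qed

lemma dropA_NC:
  assumes "is_inf_word G w"
  shows "iw_class G (dropA w) \<otimes>\<^bsub>top_prod G\<^esub> inv\<^bsub>top_prod G\<^esub> (iw_class G w) \<in> NC G"
proof -
  let ?F = "{q. \<exists>l. w q = Some l \<and> fst l \<in> A}"
  have "?F = (\<Union>n\<in>A. {q. \<exists>l. w q = Some l \<and> fst l = n})" by blast
  then have fF: "finite ?F" using finA iw_finite[OF assms] by simp
  have "dropA w = restr (-?F) w"
    by (rule ext) (auto simp: dropA_def restr_def split: option.splits)
  then show ?thesis using del_finite[OF fF assms groups] by simp
qed

lemma kernel_eq:
  "{U \<in> carrier (top_prod G). PhiH U \<in> NC H} = NC G"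
proof (rule equalityI; rule subsetI)
  interpret T: group "top_prod G" using group_top_prod groups by blast
  have nG: "NC G \<lhd> top_prod G" using NC_normal groups by blast
  then have sG: "subgroup (NC G) (top_prod G)" unfolding normal_def by blast
  {
    fix U assume "U \<in> {U \<in> carrier (top_prod G). PhiH U \<in> NC H}"
    then have U: "U \<in> carrier (top_prod G)" "PhiH U \<in> NC H" by auto
    obtain w where w: "is_inf_word G w" "U = iw_class G w" using U(1) by (auto simp: tp_carrier)
    have "PsiH (PhiH U) \<in> NC G" using NH_NG U(2) by blast
    moreover have "PsiH (PhiH U) = iw_class G (dropA w)"
      using w PhiH_class PsiH_class Phi_inf_word iw_class_eqI[OF Psi_Phi[OF w(1)]] by simp
    ultimately have x: "iw_class G (dropA w) \<in> NC G" by simp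
    have d: "iw_class G (dropA w) \<otimes>\<^bsub>top_prod G\<^esub> inv\<^bsub>top_prod G\<^esub> U \<in> NC G"
      using dropA_NC[OF w(1)] w(2) by simp
    have c: "iw_class G (dropA w) \<in> carrier (top_prod G)" using dropA_inf_word[OF w(1)] by (auto simp: tp_carrier)
    have "inv\<^bsub>top_prod G\<^esub> (iw_class G (dropA w) \<otimes>\<^bsub>top_prod G\<^esub> inv\<^bsub>top_prod G\<^esub> U) \<otimes>\<^bsub>top_prod G\<^esub> iw_class G (dropA w) = U"
      using c U(1) by (simp add: T.inv_mult_group T.m_assoc)
    moreover have "inv\<^bsub>top_prod G\<^esub> (iw_class G (dropA w) \<otimes>\<^bsub>top_prod G\<^esub> inv\<^bsub>top_prod G\<^esub> U) \<otimes>\<^bsub>top_prod G\<^esub> iw_class G (dropA w) \<in> NC G"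
      using subgroup.m_closed[OF sG subgroup.m_inv_closed[OF sG d] x] .
    ultimately show "U \<in> NC G" by simp
  }
  {
    fix U assume "U \<in> NC G"
    then show "U \<in> {U \<in> carrier (top_prod G). PhiH U \<in> NC H}"
      using NG_NH subgroup.subset[OF sG] by blast
  }
qed

theorem main: "archipelago G \<cong> archipelago (\<lambda>n. free_prod (P n) G)"
proof -
  have Heq: "(\<lambda>n. free_prod (P n) G) = H" by (rule ext) (simp add: H_def)
  interpret TG: group "top_prod G" using group_top_prod groups by blast
  interpret TH: group "top_prod H" using group_top_prod groupsH by blast
  have nH: "NC H \<lhd> top_prod H" using NC_normal groupsH by blast
  then have sH: "subgroup (NC H) (top_prod H)" unfolding normal_def by blast
  interpret NH: normal "NC H" "top_prod H" by (rule nH)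
  let ?h = "\<lambda>U. NC H #>\<^bsub>top_prod H\<^esub> PhiH U"
  have hom1: "(\<lambda>a. NC H #>\<^bsub>top_prod H\<^esub> a) \<in> hom (top_prod H) (top_prod H Mod NC H)"
    by (rule NH.r_coset_hom_Mod)
  have hom: "?h \<in> hom (top_prod G) (top_prod H Mod NC H)"
  proof (rule homI)
    fix U assume "U \<in> carrier (top_prod G)"
    then have "PhiH U \<in> carrier (top_prod H)" using PhiH_hom by (auto simp: hom_def)
    then show "?h U \<in> carrier (top_prod H Mod NC H)" using hom1 by (auto simp: hom_def)
  next
    fix U V assume uv: "U \<in> carrier (top_prod G)" "V \<in> carrier (top_prod G)"
    then have "PhiH U \<in> carrier (top_prod H)" "PhiH V \<in> carrier (top_prod H)"
      "PhiH (U \<otimes>\<^bsub>top_prod G\<^esub> V) = PhiH U \<otimes>\<^bsub>top_prod H\<^esub> PhiH V"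
      using PhiH_hom by (auto simp: hom_def)
    then show "?h (U \<otimes>\<^bsub>top_prod G\<^esub> V) = ?h U \<otimes>\<^bsub>top_prod H Mod NC H\<^esub> ?h V"
      using hom1 by (simp add: hom_def)
  qed
  interpret gh: group_hom "top_prod G" "top_prod H Mod NC H" ?h
    by (rule group_hom.intro) (simp_all add: TG.is_group NH.factorgroup_is_group group_hom_axioms_def hom)
  have onto: "?h ` carrier (top_prod G) = carrier (top_prod H Mod NC H)"
  proof (rule equalityI; rule subsetI)
    fix X assume "X \<in> ?h ` carrier (top_prod G)"
    then show "X \<in> carrier (top_prod H Mod NC H)" using hom by (auto simp: hom_def)
  next
    fix X assume "X \<in> carrier (top_prod H Mod NC H)"
    then obtain V where V: "V \<in> carrier (top_prod H)" "X = NC H #>\<^bsub>top_prod H\<^esub> V"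
      by (auto simp: carrier_FactGroup)
    then have "PsiH V \<in> carrier (top_prod G)" "?h (PsiH V) = X"
      using PsiH_hom PhiH_PsiH by (auto simp: hom_def)
    then show "X \<in> ?h ` carrier (top_prod G)" by blast
  qed
  have "kernel (top_prod G) (top_prod H Mod NC H) ?h = {U \<in> carrier (top_prod G). PhiH U \<in> NC H}"
  proof -
    have "NC H #>\<^bsub>top_prod H\<^esub> PhiH U = NC H \<longleftrightarrow> PhiH U \<in> NC H" if "U \<in> carrier (top_prod G)" for U
    proof -
      have c: "PhiH U \<in> carrier (top_prod H)" using that PhiH_hom by (auto simp: hom_def)
      show ?thesis using TH.coset_join1[OF _ c sH] TH.coset_join2[OF c sH] by blast
    qed
    then show ?thesis by (auto simp: kernel_def)
  qed
  then have ker: "kernel (top_prod G) (top_prod H Mod NC H) ?h = NC G" using kernel_eq by simp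
  have "top_prod G Mod NC G \<cong> top_prod H Mod NC H"
    using gh.FactGroup_iso[OF onto] ker by simp
  then show ?thesis unfolding Heq archipelago_def NC_def .
qed

end


theorem proposition18:
  fixes G :: "nat \<Rightarrow> ('a, 'b) monoid_scheme"
    and A :: "nat set"
    and P :: "nat \<Rightarrow> nat set"
  assumes groups: "\<And>n. group (G n)"
    and finA: "finite A"
    and finP: "\<And>n. finite (P n)"
    and nonempty: "\<And>n. P n \<noteq> {}"
    and disj: "\<And>m n. m \<noteq> n \<Longrightarrow> P m \<inter> P n = {}"
    and cover: "(\<Union>n. P n) = UNIV - A"
  shows "archipelago G \<cong> archipelago (\<lambda>n. free_prod (P n) G)"
proof -
  interpret arch G A P
    by (rule arch.intro) (use groups finA finP nonempty disj cover in auto)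
  show ?thesis by (rule main)
qed

end
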